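(* Let $(T,H)$ be a CFTP time with ambiguities and let $T^*$ be constructed from it. If $\mathbb P(T^*>-\infty)=1$, then $T^*$ is a CFTP time.
   Context: Setting. Fix $d\ge1$ and a finite set $S$. A transition rule is $(f,A,r)$, $A\subset\mathbb Z^d$ finite, $f:S^A\to S$ ($f$ constant if $A=\emptyset$), $r\ge0$; $\mathfrak R^x\eta$ equals $\eta$ off $x$ and $(\mathfrak R^x\eta)(x)=f((\eta(x+y))_{y\in A})$. A dynamics with rules $(f_i,A_i,r_i)_{i\in I}$ ($I$ finite) is realized by a Poisson process $\mathcal P$ on $\mathbb Z^d\times I\times\mathbb R$ of intensity $dJ(x,i,t)=r_i\,d(c_{\mathbb Z^d}\otimes c_I\otimes\mathrm{Leb})$ on the canonical space $\Omega$ of locally finite $\omega$ with (i) distinct time coordinates, (ii) infinitely many points on each $\{(x,i)\}\times\mathbb R_\pm$, (iii) every chain of points $(y_n,j_n,s_n)\in\omega$ with $y_{n+1}\in y_n+A_{j_n}$, $s_{n+1}<s_n$ has $s_n\to-\infty$. $\Phi_{t_1}^{t_2}(\xi)$: start from $\xi$ just before $t_1$, apply in time order $\mathfrak R_i^x$ for $(x,i,t)\in\mathcal P$, $t_1\le t\le t_2$; $\Phi_t^{0-}$ uses times in $[t,0)$. $\mathcal P_t:=\mathcal P\cap(\mathbb Z^d\times I\times[t,0))$, $\mathcal F_t:=\sigma(\mathcal P_t)$; shifts $\tau_{x,t}(\omega)=\{(z-x,i,s-t):(z,i,s)\in\omega\}$, $U\circ\tau_{x,t}$ = $U$ evaluated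 at the shifted configuration. A CFTP time is an a.s. finite random $T\in[-\infty,0)$ with $[\Phi_T^{0-}(\xi_1)](0)=[\Phi_T^{0-}(\xi_2)](0)$ for all $\xi_1,\xi_2$ on $\{T>-\infty\}$. With $e(\alpha,s,\xi):=[\Phi_s^t(\xi)](x)$ for $\alpha=(x,i,t)\in\mathcal P$, $s\le t$, a CFTP time with ambiguities is a pair $(T,H)$, $T\in[-\infty,0)$ a.s. finite, $H\subset\mathcal P_T$ random, finite on $\{T>-\infty\}$, $H\cap\mathcal P_t$ $\mathcal F_t$-measurable for all $t<0$, and on $\{T>-\infty\}$, $e(\alpha,T,\xi_1)=e(\alpha,T,\xi_2)$ for all $\alpha\in H$ implies $[\Phi_T^{0-}(\xi_1)](0)=[\Phi_T^{0-}(\xi_2)](0)$. Construction of $T^*$: $\mathrm{Amb}_0:=\{(0,0)\}$, $\mathrm{Amb}_{n+1}:=\bigcup_{(x,t)\in\mathrm{Amb}_n}\bigcup_{(z,i,s)\in H_{x,t}}\bigcup_{y\in A_i}\{(z+y,s)\}$ with $H_{x,t}:=\{(w+x,i,u+t):(w,i,u)\in H(\tau_{x,t}\omega)\}$, $\mathrm{Amb}_\infty:=\bigcup_n\mathrm{Amb}_n$, $T^*:=\inf_{(x,t)\in\mathrm{Amb}_\infty}(t+T\circ\tau_{x,t})$ if $\mathrm{Amb}_\infty$ is finite, $T^*:=-\infty$ otherwise. *)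

theory Defs
  imports "HOL-Probability.Probability"
begin

text \<open>Points of the Poisson process: (site, rule index, time).\<close>
type_synonym ('d, 'i) pt = "(int ^ 'd) \<times> 'i \<times> real"

definition time :: "('d::finite, 'i) pt \<Rightarrow> real" where
  "time p = snd (snd p)"

definition pts_closed :: "('d::finite, 'i) pt set \<Rightarrow> int ^ 'd \<Rightarrow> real \<Rightarrow> real \<Rightarrow> real set" where
  "pts_closed \<omega> z a b = {t. \<exists>i. (z, i, t) \<in> \<omega> \<and> a \<le> t \<and> t \<le> b}"

definition pts_open :: "('d::finite, 'i) pt set \<Rightarrow> int ^ 'd \<Rightarrow> real \<Rightarrow> real \<Rightarrow> real set" where
  "pts_open \<omega> z a b = {t. \<exists>i. (z, i, t) \<in> \<omega> \<and> a \<le> t \<and> t < b}"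

text \<open>Given V z u = state at site z right after all points with time in [s,u],
  the state at site w just before time t.\<close>
definition before_val :: "('d::finite, 'i) pt set \<Rightarrow> real \<Rightarrow> (int ^ 'd \<Rightarrow> 's)
    \<Rightarrow> (int ^ 'd \<Rightarrow> real \<Rightarrow> 's) \<Rightarrow> int ^ 'd \<Rightarrow> real \<Rightarrow> 's" where
  "before_val \<omega> s \<xi> V w t =
     (if pts_open \<omega> w s t = {} then \<xi> w else V w (Max (pts_open \<omega> w s t)))"

text \<open>Evolution equation: starting from \<xi> just before s, apply the rules of the points
  of \<omega> with time \<ge> s in time order. The rule (f i, A i) at site z reads the values
  (\<eta>(z+y))_{y \<in> A i} just before the point's time.\<close>
definition evol_eqn :: "('i \<Rightarrow> (int ^ 'd::finite) set) \<Rightarrow> ('i \<Rightarrow> (int ^ 'd \<Rightarrow> 's) \<Rightarrow> 's)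
    \<Rightarrow> ('d, 'i) pt set \<Rightarrow> real \<Rightarrow> (int ^ 'd \<Rightarrow> 's) \<Rightarrow> (int ^ 'd \<Rightarrow> real \<Rightarrow> 's) \<Rightarrow> bool" where
  "evol_eqn A f \<omega> s \<xi> V \<longleftrightarrow>
     (\<forall>z u. V z u =
        (if pts_closed \<omega> z s u = {} then \<xi> z
         else (let t = Max (pts_closed \<omega> z s u); i = (THE i. (z, i, t) \<in> \<omega>)
               in f i (\<lambda>y\<in>A i. before_val \<omega> s \<xi> V (z + y) t))))"

definition evol :: "('i \<Rightarrow> (int ^ 'd::finite) set) \<Rightarrow> ('i \<Rightarrow> (int ^ 'd \<Rightarrow> 's) \<Rightarrow> 's)
    \<Rightarrow> ('d, 'i) pt set \<Rightarrow> real \<Rightarrow> (int ^ 'd \<Rightarrow> 's) \<Rightarrow> int ^ 'd \<Rightarrow> real \<Rightarrow> 's" where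
  "evol A f \<omega> s \<xi> = (THE V. evol_eqn A f \<omega> s \<xi> V)"

definition Phi :: "('i \<Rightarrow> (int ^ 'd::finite) set) \<Rightarrow> ('i \<Rightarrow> (int ^ 'd \<Rightarrow> 's) \<Rightarrow> 's)
    \<Rightarrow> ('d, 'i) pt set \<Rightarrow> real \<Rightarrow> real \<Rightarrow> (int ^ 'd \<Rightarrow> 's) \<Rightarrow> int ^ 'd \<Rightarrow> 's" where
  "Phi A f \<omega> t1 t2 \<xi> = (\<lambda>z. evol A f \<omega> t1 \<xi> z t2)"

text \<open>Phi_before A f \<omega> t1 t2 \<xi> = \<Phi>_{t1}^{t2-}(\<xi>) (times in [t1,t2)).\<close>
definition Phi_before :: "('i \<Rightarrow> (int ^ 'd::finite) set) \<Rightarrow> ('i \<Rightarrow> (int ^ 'd \<Rightarrow> 's) \<Rightarrow> 's)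
    \<Rightarrow> ('d, 'i) pt set \<Rightarrow> real \<Rightarrow> real \<Rightarrow> (int ^ 'd \<Rightarrow> 's) \<Rightarrow> int ^ 'd \<Rightarrow> 's" where
  "Phi_before A f \<omega> t1 t2 \<xi> = (\<lambda>z. before_val \<omega> t1 \<xi> (evol A f \<omega> t1 \<xi>) z t2)"

definition e_val :: "('i \<Rightarrow> (int ^ 'd::finite) set) \<Rightarrow> ('i \<Rightarrow> (int ^ 'd \<Rightarrow> 's) \<Rightarrow> 's)
    \<Rightarrow> ('d, 'i) pt set \<Rightarrow> ('d, 'i) pt \<Rightarrow> real \<Rightarrow> (int ^ 'd \<Rightarrow> 's) \<Rightarrow> 's" where
  "e_val A f \<omega> \<alpha> s \<xi> = (case \<alpha> of (x, i, t) \<Rightarrow> Phi A f \<omega> s t \<xi> x)"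

definition canonical_space :: "('i \<Rightarrow> (int ^ 'd::finite) set) \<Rightarrow> ('d, 'i) pt set set" where
  "canonical_space A = {\<omega>.
     (\<forall>z i a b. finite {t. (z, i, t) \<in> \<omega> \<and> a \<le> t \<and> t \<le> b}) \<and>
     (\<forall>p\<in>\<omega>. \<forall>q\<in>\<omega>. time p = time q \<longrightarrow> p = q) \<and>
     (\<forall>z i. infinite {t. (z, i, t) \<in> \<omega> \<and> t > 0} \<and> infinite {t. (z, i, t) \<in> \<omega> \<and> t < 0}) \<and>
     (\<forall>(y :: nat \<Rightarrow> int ^ 'd) (j :: nat \<Rightarrow> 'i) (s :: nat \<Rightarrow> real).
        (\<forall>n. (y n, j n, s n) \<in> \<omega> \<and> y (Suc n) - y n \<in> A (j n) \<and> s (Suc n) < s n)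
        \<longrightarrow> filterlim s at_bot sequentially)}"

definition shift :: "int ^ 'd::finite \<Rightarrow> real \<Rightarrow> ('d, 'i) pt set \<Rightarrow> ('d, 'i) pt set" where
  "shift x t \<omega> = (\<lambda>(z, i, s). (z - x, i, s - t)) ` \<omega>"

definition Pt :: "('d::finite, 'i) pt set \<Rightarrow> ereal \<Rightarrow> ('d, 'i) pt set" where
  "Pt \<omega> T = {p \<in> \<omega>. T \<le> ereal (time p) \<and> time p < 0}"

definition box :: "int ^ 'd::finite \<Rightarrow> 'i \<Rightarrow> real set \<Rightarrow> ('d, 'i) pt set" where
  "box x i U = {x} \<times> {i} \<times> U"

definition count_gen :: "('d::finite, 'i) pt set set \<Rightarrow> real set set \<Rightarrow> ('d, 'i) pt set set set" where
  "count_gen \<Omega> Us = {{\<omega> \<in> \<Omega>. card (\<omega> \<inter> box x i U) = k} | x i U k. U \<in> Us}"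

definition F_sigma :: "('d::finite, 'i) pt set set \<Rightarrow> real \<Rightarrow> ('d, 'i) pt set measure" where
  "F_sigma \<Omega> t = sigma \<Omega> (count_gen \<Omega> {U. U \<in> sets borel \<and> U \<subseteq> {t..<0}})"

text \<open>M is the law of the Poisson process with intensity r_i d(counting \<otimes> counting \<otimes> Leb),
  realized on the canonical space.\<close>
definition poisson_process :: "('i \<Rightarrow> (int ^ 'd::finite) set) \<Rightarrow> ('i \<Rightarrow> real)
    \<Rightarrow> ('d, 'i) pt set measure \<Rightarrow> bool" where
  "poisson_process A r M \<longleftrightarrow>
     prob_space M \<and> space M = canonical_space A \<and>
     sets M = sigma_sets (canonical_space A)
                (count_gen (canonical_space A) {U. U \<in> sets borel \<and> bounded U}) \<and>
     (\<forall>(K :: nat set) (X :: nat \<Rightarrow> int ^ 'd) (J :: nat \<Rightarrow> 'i) (U :: nat \<Rightarrow> real set).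
        finite K \<longrightarrow> (\<forall>k\<in>K. U k \<in> sets borel \<and> bounded (U k)) \<longrightarrow>
        disjoint_family_on (\<lambda>k. box (X k) (J k) (U k)) K \<longrightarrow>
          prob_space.indep_vars M (\<lambda>_. count_space UNIV)
             (\<lambda>k \<omega>. card (\<omega> \<inter> box (X k) (J k) (U k))) K \<and>
          (\<forall>k\<in>K. \<forall>n::nat.
             measure M {\<omega> \<in> space M. card (\<omega> \<inter> box (X k) (J k) (U k)) = n}
             = exp (- (r (J k) * measure lborel (U k))) * (r (J k) * measure lborel (U k)) ^ n
               / fact n))"

definition cftp_time :: "('i \<Rightarrow> (int ^ 'd::finite) set) \<Rightarrow> ('i \<Rightarrow> (int ^ 'd \<Rightarrow> 's) \<Rightarrow> 's)
    \<Rightarrow> ('d, 'i) pt set measure \<Rightarrow> (('d, 'i) pt set \<Rightarrow> ereal) \<Rightarrow> bool" where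
  "cftp_time A f M T \<longleftrightarrow>
     T \<in> borel_measurable M \<and> (\<forall>\<omega>\<in>space M. T \<omega> < 0) \<and>
     (AE \<omega> in M. T \<omega> \<noteq> - \<infinity>) \<and>
     (\<forall>\<omega>\<in>space M. T \<omega> \<noteq> - \<infinity> \<longrightarrow>
        (\<forall>\<xi>1 \<xi>2. Phi_before A f \<omega> (real_of_ereal (T \<omega>)) 0 \<xi>1 0
                 = Phi_before A f \<omega> (real_of_ereal (T \<omega>)) 0 \<xi>2 0))"

definition cftp_amb :: "('i \<Rightarrow> (int ^ 'd::finite) set) \<Rightarrow> ('i \<Rightarrow> (int ^ 'd \<Rightarrow> 's) \<Rightarrow> 's)
    \<Rightarrow> ('d, 'i) pt set measure \<Rightarrow> (('d, 'i) pt set \<Rightarrow> ereal)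
    \<Rightarrow> (('d, 'i) pt set \<Rightarrow> ('d, 'i) pt set) \<Rightarrow> bool" where
  "cftp_amb A f M T H \<longleftrightarrow>
     T \<in> borel_measurable M \<and> (\<forall>\<omega>\<in>space M. T \<omega> < 0) \<and>
     (AE \<omega> in M. T \<omega> \<noteq> - \<infinity>) \<and>
     (\<forall>\<omega>\<in>space M. H \<omega> \<subseteq> Pt \<omega> (T \<omega>)) \<and>
     (\<forall>\<omega>\<in>space M. T \<omega> \<noteq> - \<infinity> \<longrightarrow> finite (H \<omega>)) \<and>
     (\<forall>t::real. t < 0 \<longrightarrow> (\<forall>x i U k. U \<in> sets borel \<longrightarrow> U \<subseteq> {t..<0} \<longrightarrow>
        {\<omega> \<in> space M. card (H \<omega> \<inter> Pt \<omega> (ereal t) \<inter> box x i U) = k}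
          \<in> sets (F_sigma (space M) t))) \<and>
     (\<forall>\<omega>\<in>space M. T \<omega> \<noteq> - \<infinity> \<longrightarrow>
        (\<forall>\<xi>1 \<xi>2. (\<forall>\<alpha>\<in>H \<omega>. e_val A f \<omega> \<alpha> (real_of_ereal (T \<omega>)) \<xi>1
                              = e_val A f \<omega> \<alpha> (real_of_ereal (T \<omega>)) \<xi>2)
           \<longrightarrow> Phi_before A f \<omega> (real_of_ereal (T \<omega>)) 0 \<xi>1 0
               = Phi_before A f \<omega> (real_of_ereal (T \<omega>)) 0 \<xi>2 0))"

definition H_shift :: "(('d::finite, 'i) pt set \<Rightarrow> ('d, 'i) pt set) \<Rightarrow> ('d, 'i) pt set
    \<Rightarrow> int ^ 'd \<Rightarrow> real \<Rightarrow> ('d, 'i) pt set" where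
  "H_shift H \<omega> x t = (\<lambda>(w, i, u). (w + x, i, u + t)) ` H (shift x t \<omega>)"

fun Amb :: "('i \<Rightarrow> (int ^ 'd::finite) set) \<Rightarrow> (('d, 'i) pt set \<Rightarrow> ('d, 'i) pt set)
    \<Rightarrow> ('d, 'i) pt set \<Rightarrow> nat \<Rightarrow> ((int ^ 'd) \<times> real) set" where
  "Amb A H \<omega> 0 = {(0, 0)}"
| "Amb A H \<omega> (Suc n) =
     (\<Union>(x, t)\<in>Amb A H \<omega> n. \<Union>(z, i, s)\<in>H_shift H \<omega> x t. (\<lambda>y. (z + y, s)) ` A i)"

definition Amb_inf :: "('i \<Rightarrow> (int ^ 'd::finite) set) \<Rightarrow> (('d, 'i) pt set \<Rightarrow> ('d, 'i) pt set)
    \<Rightarrow> ('d, 'i) pt set \<Rightarrow> ((int ^ 'd) \<times> real) set" where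
  "Amb_inf A H \<omega> = (\<Union>n. Amb A H \<omega> n)"

definition Tstar :: "('i \<Rightarrow> (int ^ 'd::finite) set) \<Rightarrow> (('d, 'i) pt set \<Rightarrow> ereal)
    \<Rightarrow> (('d, 'i) pt set \<Rightarrow> ('d, 'i) pt set) \<Rightarrow> ('d, 'i) pt set \<Rightarrow> ereal" where
  "Tstar A T H \<omega> =
     (if finite (Amb_inf A H \<omega>)
      then (INF (x, t)\<in>Amb_inf A H \<omega>. ereal t + T (shift x t \<omega>))
      else - \<infinity>)"

end

theory Submission
  imports Defs
begin


lemma cs_lf: "\<omega> \<in> canonical_space A \<Longrightarrow> finite {t. (z, i, t) \<in> \<omega> \<and> a \<le> t \<and> t \<le> b}"
  unfolding canonical_space_def by blast

lemma cs_dt: "\<omega> \<in> canonical_space A \<Longrightarrow> p \<in> \<omega> \<Longrightarrow> q \<in> \<omega> \<Longrightarrow> time p = time q \<Longrightarrow> p = q"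
  unfolding canonical_space_def by blast

lemma cs_chain: "\<omega> \<in> canonical_space A \<Longrightarrow>
   (\<And>n. (y n, j n, s n) \<in> \<omega>) \<Longrightarrow> (\<And>n. y (Suc n) - y n \<in> A (j n)) \<Longrightarrow> (\<And>n. s (Suc n) < s n)
   \<Longrightarrow> filterlim s at_bot sequentially"
  unfolding canonical_space_def by blast

lemma cs_rule_unique: "\<omega> \<in> canonical_space A \<Longrightarrow> (z, i, t) \<in> \<omega> \<Longrightarrow> (z', i', t) \<in> \<omega> \<Longrightarrow> z' = z \<and> i' = i"
  using cs_dt[of \<omega> A "(z,i,t)" "(z',i',t)"] by (auto simp: time_def)

lemma the_rule: "\<omega> \<in> canonical_space A \<Longrightarrow> (z, i, t) \<in> \<omega> \<Longrightarrow> (THE i. (z, i, t) \<in> \<omega>) = i"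
  using cs_rule_unique[of \<omega> A z i t] by blast

lemma pts_closed_finite:
  assumes "\<omega> \<in> canonical_space (A :: 'i::finite \<Rightarrow> _)"
  shows "finite (pts_closed \<omega> z a b)"
proof -
  have "pts_closed \<omega> z a b = (\<Union>i. {t. (z, i, t) \<in> \<omega> \<and> a \<le> t \<and> t \<le> b})"
    unfolding pts_closed_def by auto
  then show ?thesis using cs_lf[OF assms] by simp
qed

lemma pts_open_sub: "pts_open \<omega> z a b \<subseteq> pts_closed \<omega> z a b"
  unfolding pts_open_def pts_closed_def by auto

lemma pts_open_finite:
  assumes "\<omega> \<in> canonical_space (A :: 'i::finite \<Rightarrow> _)"
  shows "finite (pts_open \<omega> z a b)"
  using pts_closed_finite[OF assms] pts_open_sub finite_subset by metis

lemma pts_closed_iff: "t \<in> pts_closed \<omega> z a b \<longleftrightarrow> (\<exists>i. (z, i, t) \<in> \<omega>) \<and> a \<le> t \<and> t \<le> b"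
  unfolding pts_closed_def by auto

lemma pts_open_iff: "t \<in> pts_open \<omega> z a b \<longleftrightarrow> (\<exists>i. (z, i, t) \<in> \<omega>) \<and> a \<le> t \<and> t < b"
  unfolding pts_open_def by auto


definition depR :: "('i \<Rightarrow> (int ^ 'd::finite) set) \<Rightarrow> ('d, 'i) pt set \<Rightarrow> real \<Rightarrow> (((int ^ 'd) \<times> real) \<times> ((int ^ 'd) \<times> real)) set" where
  "depR A \<omega> s = {((w, t'), (z, u)). pts_closed \<omega> z s u \<noteq> {} \<and>
      (\<exists>i y. (z, i, Max (pts_closed \<omega> z s u)) \<in> \<omega> \<and> y \<in> A i \<and> w = z + y \<and>
         pts_open \<omega> w s (Max (pts_closed \<omega> z s u)) \<noteq> {} \<and>
         t' = Max (pts_open \<omega> w s (Max (pts_closed \<omega> z s u))))}"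

lemma depR_I:
  assumes "pts_closed \<omega> z s u \<noteq> {}" "(z, i, Max (pts_closed \<omega> z s u)) \<in> \<omega>" "y \<in> A i"
    "pts_open \<omega> (z + y) s (Max (pts_closed \<omega> z s u)) \<noteq> {}"
  shows "((z + y, Max (pts_open \<omega> (z + y) s (Max (pts_closed \<omega> z s u)))), (z, u)) \<in> depR A \<omega> s"
  using assms unfolding depR_def by (simp; blast)

lemma depR_E:
  assumes "((w, t'), (z, u)) \<in> depR A \<omega> s"
  shows "pts_closed \<omega> z s u \<noteq> {} \<and> (\<exists>i y. (z, i, Max (pts_closed \<omega> z s u)) \<in> \<omega> \<and> y \<in> A i \<and> w = z + y \<and>
         pts_open \<omega> w s (Max (pts_closed \<omega> z s u)) \<noteq> {} \<and>
         t' = Max (pts_open \<omega> w s (Max (pts_closed \<omega> z s u))))"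
  using assms unfolding depR_def by simp

lemma Max_closed_in:
  assumes "\<omega> \<in> canonical_space (A :: 'i::finite \<Rightarrow> _)" "pts_closed \<omega> z a b \<noteq> {}"
  shows "Max (pts_closed \<omega> z a b) \<in> pts_closed \<omega> z a b"
  using pts_closed_finite[OF assms(1)] assms(2) by (rule Max_in)

lemma Max_open_in:
  assumes "\<omega> \<in> canonical_space (A :: 'i::finite \<Rightarrow> _)" "pts_open \<omega> z a b \<noteq> {}"
  shows "Max (pts_open \<omega> z a b) \<in> pts_open \<omega> z a b"
  using pts_open_finite[OF assms(1)] assms(2) by (rule Max_in)

lemma wf_depR:
  assumes om: "\<omega> \<in> canonical_space (A :: 'i::finite \<Rightarrow> _)"
  shows "wf (depR A \<omega> s)"
proof (rule ccontr)
  assume "\<not> wf (depR A \<omega> s)"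
  then obtain g where g: "\<And>n. (g (Suc n), g n) \<in> depR A \<omega> s"
    unfolding wf_iff_no_infinite_down_chain by blast
  define z where "z n = fst (g n)" for n
  define u where "u n = snd (g n)" for n
  define t where "t n = Max (pts_closed \<omega> (z n) s (u n))" for n
  have gn: "g n = (z n, u n)" for n by (simp add: z_def u_def)
  have st: "pts_closed \<omega> (z n) s (u n) \<noteq> {} \<and> (\<exists>i y. (z n, i, t n) \<in> \<omega> \<and> y \<in> A i \<and> z (Suc n) = z n + y \<and>
         pts_open \<omega> (z (Suc n)) s (t n) \<noteq> {} \<and> u (Suc n) = Max (pts_open \<omega> (z (Suc n)) s (t n)))" for n
    using depR_E[of "z (Suc n)" "u (Suc n)" "z n" "u n" A \<omega> s] g[of n] unfolding gn t_def by blast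
  then obtain I Y where IY: "\<And>n. (z n, I n, t n) \<in> \<omega> \<and> Y n \<in> A (I n) \<and> z (Suc n) = z n + Y n \<and>
         pts_open \<omega> (z (Suc n)) s (t n) \<noteq> {} \<and> u (Suc n) = Max (pts_open \<omega> (z (Suc n)) s (t n))"
    by metis
  have tin: "t n \<in> pts_closed \<omega> (z n) s (u n)" for n
    unfolding t_def using Max_closed_in[OF om] st by blast
  have tge: "s \<le> t n" "t n \<le> u n" for n using tin[of n] by (auto simp: pts_closed_iff)
  have ult: "u (Suc n) < t n" for n
  proof -
    have ne: "pts_open \<omega> (z (Suc n)) s (t n) \<noteq> {}" using IY[of n] by blast
    have "Max (pts_open \<omega> (z (Suc n)) s (t n)) < t n"
      using Max_open_in[OF om ne] unfolding pts_open_iff by blast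
    moreover have "u (Suc n) = Max (pts_open \<omega> (z (Suc n)) s (t n))" using IY[of n] by blast
    ultimately show ?thesis by simp
  qed
  have dec: "t (Suc n) < t n" for n using tge(2)[of "Suc n"] ult[of n] by linarith
  have "filterlim t at_bot sequentially"
    by (rule cs_chain[OF om, of z I t]) (use IY dec in auto)
  then have "eventually (\<lambda>n. t n \<le> s - 1) sequentially"
    by (simp add: filterlim_at_bot)
  then obtain n where "t n \<le> s - 1" by (auto simp: eventually_sequentially)
  with tge(1)[of n] show False by linarith
qed

definition evF :: "('i \<Rightarrow> (int ^ 'd::finite) set) \<Rightarrow> ('i \<Rightarrow> (int ^ 'd \<Rightarrow> 's) \<Rightarrow> 's)
    \<Rightarrow> ('d, 'i) pt set \<Rightarrow> real \<Rightarrow> (int ^ 'd \<Rightarrow> 's) \<Rightarrow> ((int ^ 'd) \<times> real \<Rightarrow> 's) \<Rightarrow> (int ^ 'd) \<times> real \<Rightarrow> 's" where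
  "evF A f \<omega> s \<xi> g = (\<lambda>(z, u).
        (if pts_closed \<omega> z s u = {} then \<xi> z
         else (let t = Max (pts_closed \<omega> z s u); i = (THE i. (z, i, t) \<in> \<omega>)
               in f i (\<lambda>y\<in>A i. if pts_open \<omega> (z + y) s t = {} then \<xi> (z + y)
                                 else g (z + y, Max (pts_open \<omega> (z + y) s t))))))"

lemma evol_exists:
  assumes om: "\<omega> \<in> canonical_space (A :: 'i::finite \<Rightarrow> _)"
  shows "evol_eqn A f \<omega> s \<xi> (\<lambda>z u. wfrec (depR A \<omega> s) (evF A f \<omega> s \<xi>) (z, u))"
  unfolding evol_eqn_def
proof (intro allI)
  fix z u
  let ?W = "wfrec (depR A \<omega> s) (evF A f \<omega> s \<xi>)"
  have "?W (z, u) = evF A f \<omega> s \<xi> (cut ?W (depR A \<omega> s) (z, u)) (z, u)"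
    by (rule wfrec[OF wf_depR[OF om]])
  also have "\<dots> = evF A f \<omega> s \<xi> ?W (z, u)"
  proof (cases "pts_closed \<omega> z s u = {}")
    case True then show ?thesis by (simp add: evF_def)
  next
    case False
    define t where "t = Max (pts_closed \<omega> z s u)"
    define i where "i = (THE i. (z, i, t) \<in> \<omega>)"
    obtain i0 where i0: "(z, i0, t) \<in> \<omega>"
      using Max_closed_in[OF om False] unfolding t_def pts_closed_iff by blast
    have ii: "i = i0" unfolding i_def using the_rule[OF om i0] .
    have "(\<lambda>y\<in>A i. if pts_open \<omega> (z + y) s t = {} then \<xi> (z + y)
              else cut ?W (depR A \<omega> s) (z, u) (z + y, Max (pts_open \<omega> (z + y) s t)))
        = (\<lambda>y\<in>A i. if pts_open \<omega> (z + y) s t = {} then \<xi> (z + y)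
              else ?W (z + y, Max (pts_open \<omega> (z + y) s t)))"
    proof (rule restrict_ext)
      fix y assume y: "y \<in> A i"
      show "(if pts_open \<omega> (z + y) s t = {} then \<xi> (z + y)
              else cut ?W (depR A \<omega> s) (z, u) (z + y, Max (pts_open \<omega> (z + y) s t)))
          = (if pts_open \<omega> (z + y) s t = {} then \<xi> (z + y)
              else ?W (z + y, Max (pts_open \<omega> (z + y) s t)))"
      proof (cases "pts_open \<omega> (z + y) s t = {}")
        case False
        have "((z + y, Max (pts_open \<omega> (z + y) s t)), (z, u)) \<in> depR A \<omega> s"
          unfolding t_def using \<open>pts_closed \<omega> z s u \<noteq> {}\<close> i0 y ii False
          by (intro depR_I) (auto simp: t_def)
        then show ?thesis by (simp add: cut_apply)
      qed simp
    qed
    then show ?thesis using False by (simp add: evF_def t_def[symmetric] i_def[symmetric] Let_def)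
  qed
  finally show "?W (z, u) = (if pts_closed \<omega> z s u = {} then \<xi> z
         else (let t = Max (pts_closed \<omega> z s u); i = (THE i. (z, i, t) \<in> \<omega>)
               in f i (\<lambda>y\<in>A i. before_val \<omega> s \<xi> (\<lambda>z u. ?W (z, u)) (z + y) t)))"
    by (simp add: evF_def before_val_def Let_def)
qed

lemma evol_unique:
  assumes om: "\<omega> \<in> canonical_space (A :: 'i::finite \<Rightarrow> _)"
    and V1: "evol_eqn A f \<omega> s \<xi> V1" and V2: "evol_eqn A f \<omega> s \<xi> V2"
  shows "V1 = V2"
proof -
  have "V1 (fst p) (snd p) = V2 (fst p) (snd p)" for p
  proof (induction p rule: wf_induct_rule[OF wf_depR[OF om, of s]])
    case (1 p)
    obtain z u where p: "p = (z, u)" by (cases p)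
    show ?case
    proof (cases "pts_closed \<omega> z s u = {}")
      case True then show ?thesis
        using V1 V2 unfolding evol_eqn_def p by simp
    next
      case False
      define t where "t = Max (pts_closed \<omega> z s u)"
      define i where "i = (THE i. (z, i, t) \<in> \<omega>)"
      obtain i0 where i0: "(z, i0, t) \<in> \<omega>"
        using Max_closed_in[OF om False] unfolding t_def pts_closed_iff by blast
      have ii: "i = i0" unfolding i_def using the_rule[OF om i0] .
      have "(\<lambda>y\<in>A i. before_val \<omega> s \<xi> V1 (z + y) t) = (\<lambda>y\<in>A i. before_val \<omega> s \<xi> V2 (z + y) t)"
      proof (rule restrict_ext)
        fix y assume y: "y \<in> A i"
        show "before_val \<omega> s \<xi> V1 (z + y) t = before_val \<omega> s \<xi> V2 (z + y) t"
        proof (cases "pts_open \<omega> (z + y) s t = {}")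
          case True then show ?thesis by (simp add: before_val_def)
        next
          case F2: False
          have "((z + y, Max (pts_open \<omega> (z + y) s t)), p) \<in> depR A \<omega> s"
            unfolding p t_def using False i0 y ii F2 by (intro depR_I) (auto simp: t_def)
          from "1"[OF this] show ?thesis using F2 by (simp add: before_val_def)
        qed
      qed
      then show ?thesis using V1 V2 False unfolding evol_eqn_def p
        by (simp add: Let_def t_def[symmetric] i_def[symmetric])
    qed
  qed
  then show ?thesis by (intro ext) (metis fst_conv snd_conv)
qed

lemma evol_eqn_evol:
  assumes om: "\<omega> \<in> canonical_space (A :: 'i::finite \<Rightarrow> _)"
  shows "evol_eqn A f \<omega> s \<xi> (evol A f \<omega> s \<xi>)"
proof -
  let ?V = "\<lambda>z u. wfrec (depR A \<omega> s) (evF A f \<omega> s \<xi>) (z, u)"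
  have "evol_eqn A f \<omega> s \<xi> (THE V. evol_eqn A f \<omega> s \<xi> V)"
  proof (rule theI[of _ ?V])
    show "evol_eqn A f \<omega> s \<xi> ?V" by (rule evol_exists[OF om])
    fix V assume "evol_eqn A f \<omega> s \<xi> V"
    then show "V = ?V" using evol_unique[OF om _ evol_exists[OF om]] by blast
  qed
  then show ?thesis unfolding evol_def .
qed

lemma evol_eq_if:
  assumes om: "\<omega> \<in> canonical_space (A :: 'i::finite \<Rightarrow> _)" and "evol_eqn A f \<omega> s \<xi> V"
  shows "evol A f \<omega> s \<xi> = V"
  using evol_unique[OF om evol_eqn_evol[OF om] assms(2)] .


lemma Max_eq_lemma: "finite S \<Longrightarrow> m \<in> S \<Longrightarrow> (\<And>x. x \<in> S \<Longrightarrow> x \<le> m) \<Longrightarrow> Max S = (m::real)"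
  by (rule Max_eqI)

lemma evol_eqn_at:
  assumes om: "\<omega> \<in> canonical_space (A :: 'i::finite \<Rightarrow> _)"
  shows "evol A f \<omega> s \<xi> z u =
        (if pts_closed \<omega> z s u = {} then \<xi> z
         else (let t = Max (pts_closed \<omega> z s u); i = (THE i. (z, i, t) \<in> \<omega>)
               in f i (\<lambda>y\<in>A i. before_val \<omega> s \<xi> (evol A f \<omega> s \<xi>) (z + y) t)))"
  using evol_eqn_evol[OF om, of f s \<xi>] unfolding evol_eqn_def by blast

lemma evol_at_point:
  assumes om: "\<omega> \<in> canonical_space (A :: 'i::finite \<Rightarrow> _)" and p: "(x, i, t) \<in> \<omega>" and st: "s \<le> t"
  shows "evol A f \<omega> s \<xi> x t = f i (\<lambda>y\<in>A i. before_val \<omega> s \<xi> (evol A f \<omega> s \<xi>) (x + y) t)"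
proof -
  have tin: "t \<in> pts_closed \<omega> x s t" using p st by (auto simp: pts_closed_iff)
  have M: "Max (pts_closed \<omega> x s t) = t"
    by (rule Max_eq_lemma[OF pts_closed_finite[OF om] tin]) (auto simp: pts_closed_iff)
  have ne: "pts_closed \<omega> x s t \<noteq> {}" using tin by blast
  show ?thesis
    unfolding evol_eqn_at[OF om, of f s \<xi> x t] using ne M the_rule[OF om p] by (simp add: Let_def)
qed

lemma flow_bv:
  assumes om: "\<omega> \<in> canonical_space (A :: 'i::finite \<Rightarrow> _)" and ss: "s \<le> s'" and ts: "s' \<le> t"
    and eta: "\<eta> = (\<lambda>z. before_val \<omega> s \<xi> V z s')"
    and W: "W = (\<lambda>z u. if pts_closed \<omega> z s' u = {} then \<eta> z else V z u)"
  shows "before_val \<omega> s \<xi> V w t = before_val \<omega> s' \<eta> W w t"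
proof (cases "pts_open \<omega> w s' t = {}")
  case True
  have "pts_open \<omega> w s t = pts_open \<omega> w s s'"
  proof (intro set_eqI iffI)
    fix q assume q: "q \<in> pts_open \<omega> w s t"
    show "q \<in> pts_open \<omega> w s s'"
    proof (rule ccontr)
      assume "q \<notin> pts_open \<omega> w s s'"
      then have "q \<in> pts_open \<omega> w s' t" using q by (auto simp: pts_open_iff)
      then show False using True by blast
    qed
  next
    fix q assume "q \<in> pts_open \<omega> w s s'" then show "q \<in> pts_open \<omega> w s t"
      using ts by (auto simp: pts_open_iff)
  qed
  then show ?thesis using True by (simp add: before_val_def eta)
next
  case False
  define m where "m = Max (pts_open \<omega> w s' t)"
  have min: "m \<in> pts_open \<omega> w s' t" unfolding m_def by (rule Max_open_in[OF om False])
  have m2: "Max (pts_open \<omega> w s t) = m"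
  proof (rule Max_eq_lemma[OF pts_open_finite[OF om]])
    show "m \<in> pts_open \<omega> w s t" using min ss by (auto simp: pts_open_iff)
    fix q assume q: "q \<in> pts_open \<omega> w s t"
    show "q \<le> m"
    proof (cases "s' \<le> q")
      case True
      then have "q \<in> pts_open \<omega> w s' t" using q by (auto simp: pts_open_iff)
      then show ?thesis unfolding m_def using pts_open_finite[OF om] by (rule Max_ge[rotated])
    next
      case False then show ?thesis using min by (auto simp: pts_open_iff)
    qed
  qed
  have "m \<in> pts_open \<omega> w s t" using min ss by (auto simp: pts_open_iff)
  then have ne2: "pts_open \<omega> w s t \<noteq> {}" by blast
  have "m \<in> pts_closed \<omega> w s' m" using min by (auto simp: pts_open_iff pts_closed_iff)
  then have "pts_closed \<omega> w s' m \<noteq> {}" by blast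
  then have "W w m = V w m" by (simp add: W)
  then show ?thesis using False ne2 m2 by (simp add: before_val_def m_def)
qed

lemma flow:
  assumes om: "\<omega> \<in> canonical_space (A :: 'i::finite \<Rightarrow> _)" and ss: "s \<le> s'" and ts: "s' \<le> t"
  shows "before_val \<omega> s \<xi> (evol A f \<omega> s \<xi>) w t =
         before_val \<omega> s' (\<lambda>z. before_val \<omega> s \<xi> (evol A f \<omega> s \<xi>) z s')
            (evol A f \<omega> s' (\<lambda>z. before_val \<omega> s \<xi> (evol A f \<omega> s \<xi>) z s')) w t"
proof -
  define V where "V = evol A f \<omega> s \<xi>"
  define \<eta> where "\<eta> = (\<lambda>z. before_val \<omega> s \<xi> V z s')"
  define W where "W = (\<lambda>z u. if pts_closed \<omega> z s' u = {} then \<eta> z else V z u)"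
  have bv: "before_val \<omega> s \<xi> V w' t' = before_val \<omega> s' \<eta> W w' t'" if "s' \<le> t'" for w' t'
    by (rule flow_bv[OF om ss that \<eta>_def W_def])
  have "evol_eqn A f \<omega> s' \<eta> W"
    unfolding evol_eqn_def
  proof (intro allI)
    fix z u
    show "W z u = (if pts_closed \<omega> z s' u = {} then \<eta> z
         else (let t = Max (pts_closed \<omega> z s' u); i = (THE i. (z, i, t) \<in> \<omega>)
               in f i (\<lambda>y\<in>A i. before_val \<omega> s' \<eta> W (z + y) t)))"
    proof (cases "pts_closed \<omega> z s' u = {}")
      case True then show ?thesis by (simp add: W_def)
    next
      case False
      define m where "m = Max (pts_closed \<omega> z s' u)"
      have min: "m \<in> pts_closed \<omega> z s' u" unfolding m_def by (rule Max_closed_in[OF om False])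
      have m2: "Max (pts_closed \<omega> z s u) = m"
      proof (rule Max_eq_lemma[OF pts_closed_finite[OF om]])
        show "m \<in> pts_closed \<omega> z s u" using min ss by (auto simp: pts_closed_iff)
        fix q assume q: "q \<in> pts_closed \<omega> z s u"
        show "q \<le> m"
        proof (cases "s' \<le> q")
          case True
          then have "q \<in> pts_closed \<omega> z s' u" using q by (auto simp: pts_closed_iff)
          then show ?thesis unfolding m_def using pts_closed_finite[OF om] by (rule Max_ge[rotated])
        next
          case False then show ?thesis using min by (auto simp: pts_closed_iff)
        qed
      qed
      have "m \<in> pts_closed \<omega> z s u" using min ss by (auto simp: pts_closed_iff)
      then have ne2: "pts_closed \<omega> z s u \<noteq> {}" by blast
      have ms: "s' \<le> m" using min by (auto simp: pts_closed_iff)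
      have "V z u = f (THE i. (z, i, m) \<in> \<omega>) (\<lambda>y\<in>A (THE i. (z, i, m) \<in> \<omega>). before_val \<omega> s \<xi> V (z + y) m)"
        using evol_eqn_at[OF om, of f s \<xi> z u] ne2 m2 unfolding V_def by (simp add: Let_def)
      also have "\<dots> = f (THE i. (z, i, m) \<in> \<omega>) (\<lambda>y\<in>A (THE i. (z, i, m) \<in> \<omega>). before_val \<omega> s' \<eta> W (z + y) m)"
        using bv[OF ms] by simp
      finally show ?thesis using False by (simp add: W_def m_def Let_def)
    qed
  qed
  then have "evol A f \<omega> s' \<eta> = W" by (rule evol_eq_if[OF om])
  then show ?thesis using bv[OF ts] unfolding V_def \<eta>_def by simp
qed


lemma shift_mem: "(z, i, u) \<in> shift x t \<omega> \<longleftrightarrow> (z + x, i, u + t) \<in> \<omega>"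
proof
  assume "(z, i, u) \<in> shift x t \<omega>"
  then obtain p where p: "p \<in> \<omega>" "(z, i, u) = (\<lambda>(z, i, s). (z - x, i, s - t)) p"
    unfolding shift_def by blast
  obtain a b c where "p = (a, b, c)" by (cases p)
  with p show "(z + x, i, u + t) \<in> \<omega>" by simp
next
  assume "(z + x, i, u + t) \<in> \<omega>"
  then have "(\<lambda>(z, i, s). (z - x, i, s - t)) (z + x, i, u + t) \<in> shift x t \<omega>"
    unfolding shift_def by (rule imageI)
  then show "(z, i, u) \<in> shift x t \<omega>" by simp
qed

lemma shift_0: "shift 0 0 \<omega> = \<omega>"
proof -
  have "(\<lambda>(z, i, s). (z - (0::int^'a), i, s - (0::real))) = (\<lambda>p. p)" by auto
  then show ?thesis unfolding shift_def by simp
qed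

lemma shift_sets_eq:
  "{v. (z, i, v) \<in> shift x t \<omega> \<and> P v} = (\<lambda>q. q - t) ` {q. (z + x, i, q) \<in> \<omega> \<and> P (q - t)}"
proof (intro set_eqI iffI)
  fix v assume "v \<in> {v. (z, i, v) \<in> shift x t \<omega> \<and> P v}"
  then have "v + t \<in> {q. (z + x, i, q) \<in> \<omega> \<and> P (q - t)}" by (simp add: shift_mem)
  then show "v \<in> (\<lambda>q. q - t) ` {q. (z + x, i, q) \<in> \<omega> \<and> P (q - t)}" by (rule rev_image_eqI) simp
next
  fix v assume "v \<in> (\<lambda>q. q - t) ` {q. (z + x, i, q) \<in> \<omega> \<and> P (q - t)}"
  then show "v \<in> {v. (z, i, v) \<in> shift x t \<omega> \<and> P v}" by (auto simp: shift_mem)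
qed

lemma infinite_gt_shift:
  assumes lf: "\<And>a b. finite {q. Q q \<and> a \<le> q \<and> q \<le> b}" and inf: "infinite {q. Q q \<and> q > (0::real)}"
  shows "infinite {q. Q q \<and> q > t}"
proof
  assume fin: "finite {q. Q q \<and> q > t}"
  have "{q. Q q \<and> q > 0} \<subseteq> {q. Q q \<and> q > t} \<union> {q. Q q \<and> 0 \<le> q \<and> q \<le> t}" by auto
  then have "finite {q. Q q \<and> q > 0}" using fin lf[of 0 t] by (meson finite_UnI finite_subset)
  with inf show False by simp
qed

lemma infinite_lt_shift:
  assumes lf: "\<And>a b. finite {q. Q q \<and> a \<le> q \<and> q \<le> b}" and inf: "infinite {q. Q q \<and> q < (0::real)}"
  shows "infinite {q. Q q \<and> q < t}"
proof
  assume fin: "finite {q. Q q \<and> q < t}"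
  have "{q. Q q \<and> q < 0} \<subseteq> {q. Q q \<and> q < t} \<union> {q. Q q \<and> t \<le> q \<and> q \<le> 0}" by auto
  then have "finite {q. Q q \<and> q < 0}" using fin lf[of t 0] by (meson finite_UnI finite_subset)
  with inf show False by simp
qed

lemma shift_cs:
  assumes om: "\<omega> \<in> canonical_space A"
  shows "shift x t \<omega> \<in> canonical_space A"
proof -
  have inj: "inj (\<lambda>q::real. q - t)" by (rule injI) simp
  have lf: "finite {v. (z, i, v) \<in> shift x t \<omega> \<and> a \<le> v \<and> v \<le> b}" for z i a b
  proof -
    have "{v. (z, i, v) \<in> shift x t \<omega> \<and> a \<le> v \<and> v \<le> b}
       = (\<lambda>q. q - t) ` {q. (z + x, i, q) \<in> \<omega> \<and> a \<le> q - t \<and> q - t \<le> b}" by (rule shift_sets_eq)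
    also have "{q. (z + x, i, q) \<in> \<omega> \<and> a \<le> q - t \<and> q - t \<le> b} = {q. (z + x, i, q) \<in> \<omega> \<and> a + t \<le> q \<and> q \<le> b + t}"
      by auto
    finally show ?thesis using cs_lf[OF om] by simp
  qed
  have dt: "p = q" if "p \<in> shift x t \<omega>" "q \<in> shift x t \<omega>" "time p = time q" for p q
  proof -
    obtain a b c where p: "p = (a, b, c)" by (cases p)
    obtain a' b' c' where q: "q = (a', b', c')" by (cases q)
    have "(a + x, b, c + t) \<in> \<omega>" "(a' + x, b', c' + t) \<in> \<omega>" using that p q by (auto simp: shift_mem)
    moreover have "c + t = c' + t" using that(3) p q by (simp add: time_def)
    ultimately have "(a + x, b, c + t) = (a' + x, b', c' + t)"
      using cs_dt[OF om, of "(a + x, b, c + t)" "(a' + x, b', c' + t)"] by (simp add: time_def)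
    then show ?thesis using p q by simp
  qed
  have ip: "infinite {v. (z, i, v) \<in> shift x t \<omega> \<and> v > 0}" for z i
  proof -
    have "{v. (z, i, v) \<in> shift x t \<omega> \<and> v > 0} = (\<lambda>q. q - t) ` {q. (z + x, i, q) \<in> \<omega> \<and> q - t > 0}"
      by (rule shift_sets_eq)
    moreover have "{q. (z + x, i, q) \<in> \<omega> \<and> q - t > 0} = {q. (z + x, i, q) \<in> \<omega> \<and> q > t}" by auto
    moreover have "infinite {q. (z + x, i, q) \<in> \<omega> \<and> q > t}"
      by (rule infinite_gt_shift) (use om in \<open>auto simp: canonical_space_def\<close>)
    ultimately show ?thesis using inj by (simp add: finite_image_iff inj_on_subset[OF inj])
  qed
  have ineg: "infinite {v. (z, i, v) \<in> shift x t \<omega> \<and> v < 0}" for z i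
  proof -
    have "{v. (z, i, v) \<in> shift x t \<omega> \<and> v < 0} = (\<lambda>q. q - t) ` {q. (z + x, i, q) \<in> \<omega> \<and> q - t < 0}"
      by (rule shift_sets_eq)
    moreover have "{q. (z + x, i, q) \<in> \<omega> \<and> q - t < 0} = {q. (z + x, i, q) \<in> \<omega> \<and> q < t}" by auto
    moreover have "infinite {q. (z + x, i, q) \<in> \<omega> \<and> q < t}"
      by (rule infinite_lt_shift) (use om in \<open>auto simp: canonical_space_def\<close>)
    ultimately show ?thesis using inj by (simp add: finite_image_iff inj_on_subset[OF inj])
  qed
  have ch: "filterlim s at_bot sequentially"
    if c: "\<forall>n. (y n, j n, s n) \<in> shift x t \<omega> \<and> y (Suc n) - y n \<in> A (j n) \<and> s (Suc n) < s n"
    for y :: "nat \<Rightarrow> int ^ _" and j s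
  proof -
    have "filterlim (\<lambda>n. s n + t) at_bot sequentially"
      by (rule cs_chain[OF om, of "\<lambda>n. y n + x" j]) (use c in \<open>auto simp: shift_mem\<close>)
    then have h: "\<forall>Z. eventually (\<lambda>n. s n + t \<le> Z) sequentially" by (simp add: filterlim_at_bot)
    show ?thesis unfolding filterlim_at_bot
    proof
      fix Z
      show "eventually (\<lambda>n. s n \<le> Z) sequentially"
        using h[rule_format, of "Z + t"] by (rule eventually_mono) simp
    qed
  qed
  show ?thesis unfolding canonical_space_def using lf dt ip ineg ch by blast
qed


lemma pts_closed_shift: "pts_closed (shift x t \<omega>) z a b = (\<lambda>q. q - t) ` pts_closed \<omega> (z + x) (a + t) (b + t)"
proof (intro set_eqI iffI)
  fix v assume "v \<in> pts_closed (shift x t \<omega>) z a b"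
  then have "v + t \<in> pts_closed \<omega> (z + x) (a + t) (b + t)" by (auto simp: pts_closed_iff shift_mem)
  then show "v \<in> (\<lambda>q. q - t) ` pts_closed \<omega> (z + x) (a + t) (b + t)" by (rule rev_image_eqI) simp
qed (auto simp: pts_closed_iff shift_mem)

lemma pts_open_shift: "pts_open (shift x t \<omega>) z a b = (\<lambda>q. q - t) ` pts_open \<omega> (z + x) (a + t) (b + t)"
proof (intro set_eqI iffI)
  fix v assume "v \<in> pts_open (shift x t \<omega>) z a b"
  then have "v + t \<in> pts_open \<omega> (z + x) (a + t) (b + t)" by (auto simp: pts_open_iff shift_mem)
  then show "v \<in> (\<lambda>q. q - t) ` pts_open \<omega> (z + x) (a + t) (b + t)" by (rule rev_image_eqI) simp
qed (auto simp: pts_open_iff shift_mem)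

lemma Max_minus: "finite S \<Longrightarrow> S \<noteq> {} \<Longrightarrow> Max ((\<lambda>q. q - t) ` S) = Max S - (t::real)"
  by (rule mono_Max_commute[symmetric]) (auto simp: mono_def)

lemma bv_shift:
  assumes om: "\<omega> \<in> canonical_space (A :: 'i::finite \<Rightarrow> _)"
  shows "before_val (shift x t \<omega>) s' \<xi>' (\<lambda>z u. V (z + x) (u + t)) w v
       = before_val \<omega> (s' + t) (\<lambda>w. \<xi>' (w - x)) V (w + x) (v + t)"
proof (cases "pts_open \<omega> (w + x) (s' + t) (v + t) = {}")
  case True then show ?thesis by (simp add: before_val_def pts_open_shift)
next
  case False
  have "Max (pts_open (shift x t \<omega>) w s' v) = Max (pts_open \<omega> (w + x) (s' + t) (v + t)) - t"
    unfolding pts_open_shift by (rule Max_minus[OF pts_open_finite[OF om] False])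
  then show ?thesis using False by (simp add: before_val_def pts_open_shift)
qed

lemma evol_shift:
  assumes om: "\<omega> \<in> canonical_space (A :: 'i::finite \<Rightarrow> _)"
  shows "evol A f (shift x t \<omega>) s' \<xi>' z u = evol A f \<omega> (s' + t) (\<lambda>w. \<xi>' (w - x)) (z + x) (u + t)"
proof -
  define V where "V = evol A f \<omega> (s' + t) (\<lambda>w. \<xi>' (w - x))"
  define W where "W = (\<lambda>z u. V (z + x) (u + t))"
  have om': "shift x t \<omega> \<in> canonical_space A" by (rule shift_cs[OF om])
  define \<omega>' where "\<omega>' = shift x t \<omega>"
  have "evol_eqn A f \<omega>' s' \<xi>' W"
    unfolding evol_eqn_def
  proof (intro allI)
    fix z u
    show "W z u = (if pts_closed \<omega>' z s' u = {} then \<xi>' z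
         else (let t = Max (pts_closed \<omega>' z s' u); i = (THE i. (z, i, t) \<in> \<omega>')
               in f i (\<lambda>y\<in>A i. before_val \<omega>' s' \<xi>' W (z + y) t)))"
    proof (cases "pts_closed \<omega> (z + x) (s' + t) (u + t) = {}")
      case True
      then show ?thesis using evol_eqn_at[OF om, of f "s' + t" "\<lambda>w. \<xi>' (w - x)" "z + x" "u + t"]
        by (simp add: W_def V_def pts_closed_shift \<omega>'_def)
    next
      case False
      define m where "m = Max (pts_closed \<omega> (z + x) (s' + t) (u + t))"
      have M: "Max (pts_closed \<omega>' z s' u) = m - t"
        unfolding \<omega>'_def pts_closed_shift m_def by (rule Max_minus[OF pts_closed_finite[OF om] False])
      have TH: "(THE i. (z, i, m - t) \<in> \<omega>') = (THE i. (z + x, i, m) \<in> \<omega>)"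
        by (simp add: shift_mem \<omega>'_def)
      have BV: "before_val \<omega>' s' \<xi>' W (z + y) (m - t) = before_val \<omega> (s' + t) (\<lambda>w. \<xi>' (w - x)) V (z + x + y) m" for y
        unfolding W_def \<omega>'_def bv_shift[OF om] by (simp add: algebra_simps)
      have ne: "pts_closed \<omega>' z s' u \<noteq> {}" using False by (simp add: \<omega>'_def pts_closed_shift)
      have "W z u = f (THE i. (z + x, i, m) \<in> \<omega>) (\<lambda>y\<in>A (THE i. (z + x, i, m) \<in> \<omega>). before_val \<omega> (s' + t) (\<lambda>w. \<xi>' (w - x)) V (z + x + y) m)"
        using evol_eqn_at[OF om, of f "s' + t" "\<lambda>w. \<xi>' (w - x)" "z + x" "u + t"] False
        by (simp add: W_def V_def m_def Let_def)
      then show ?thesis using ne M TH BV by (simp add: Let_def)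
    qed
  qed
  then have "evol A f \<omega>' s' \<xi>' = W" by (rule evol_eq_if[OF om'[folded \<omega>'_def]])
  then show ?thesis by (simp add: W_def V_def \<omega>'_def)
qed


lemma Amb_Suc_I:
  assumes "(x, t) \<in> Amb A H \<omega> n" "(w, i, u) \<in> H (shift x t \<omega>)" "y \<in> A i"
  shows "(w + x + y, u + t) \<in> Amb A H \<omega> (Suc n)"
proof -
  have "(w + x, i, u + t) \<in> H_shift H \<omega> x t"
    unfolding H_shift_def using assms(2) by (rule rev_image_eqI) simp
  then show ?thesis using assms(1,3) by (simp only: Amb.simps) force
qed

lemma Amb_Suc_E:
  assumes "p \<in> Amb A H \<omega> (Suc n)"
  obtains x t w i u y where "(x, t) \<in> Amb A H \<omega> n" "(w, i, u) \<in> H (shift x t \<omega>)" "y \<in> A i"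
    "p = (w + x + y, u + t)"
proof -
  from assms obtain x t z i s y where xt: "(x, t) \<in> Amb A H \<omega> n" and zis: "(z, i, s) \<in> H_shift H \<omega> x t"
    and y: "y \<in> A i" and p: "p = (z + y, s)"
    by (simp only: Amb.simps) blast
  from zis obtain w i' u where wiu: "(w, i', u) \<in> H (shift x t \<omega>)" "(z, i, s) = (w + x, i', u + t)"
    unfolding H_shift_def by auto
  show ?thesis using that[OF xt wiu(1), of y] wiu y p by simp
qed

lemma Amb_0_in: "(0, 0) \<in> Amb_inf A H \<omega>"
  unfolding Amb_inf_def by (rule UN_I[of 0]) simp_all

lemma Pt_mem: "p \<in> Pt \<omega> T \<Longrightarrow> p \<in> \<omega> \<and> T \<le> ereal (time p) \<and> time p < 0"
  unfolding Pt_def by simp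

lemma Amb_time:
  assumes sp: "space M = canonical_space A" and Hsub: "\<forall>\<omega>\<in>space M. H \<omega> \<subseteq> Pt \<omega> (T \<omega>)"
    and om: "\<omega> \<in> space M"
  shows "(x, t) \<in> Amb A H \<omega> n \<Longrightarrow> t \<le> 0"
proof (induction n arbitrary: x t)
  case 0 then show ?case by simp
next
  case (Suc n)
  from Suc.prems obtain x' t' w i u y where a: "(x', t') \<in> Amb A H \<omega> n" "(w, i, u) \<in> H (shift x' t' \<omega>)"
    "(x, t) = (w + x' + y, u + t')" by (rule Amb_Suc_E)
  have "shift x' t' \<omega> \<in> space M" using om sp shift_cs by auto
  then have "u < 0" using Hsub a(2) Pt_mem by (fastforce simp: time_def)
  then show ?case using Suc.IH[OF a(1)] a(3) by simp
qed


lemma coalesce: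
  fixes A :: "'i::finite \<Rightarrow> (int ^ 'd::finite) set"
  assumes sp: "space M = canonical_space A"
    and Tneg: "\<forall>\<omega>\<in>space M. T \<omega> < 0"
    and Hsub: "\<forall>\<omega>\<in>space M. H \<omega> \<subseteq> Pt \<omega> (T \<omega>)"
    and coal: "\<forall>\<omega>\<in>space M. T \<omega> \<noteq> - \<infinity> \<longrightarrow>
        (\<forall>\<xi>1 \<xi>2. (\<forall>\<alpha>\<in>H \<omega>. e_val A f \<omega> \<alpha> (real_of_ereal (T \<omega>)) \<xi>1
                              = e_val A f \<omega> \<alpha> (real_of_ereal (T \<omega>)) \<xi>2)
           \<longrightarrow> Phi_before A f \<omega> (real_of_ereal (T \<omega>)) 0 \<xi>1 0
               = Phi_before A f \<omega> (real_of_ereal (T \<omega>)) 0 \<xi>2 0)"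
    and om: "\<omega> \<in> space M" and fin: "Tstar A T H \<omega> \<noteq> - \<infinity>"
  shows "Phi_before A f \<omega> (real_of_ereal (Tstar A T H \<omega>)) 0 \<xi>1 0
       = Phi_before A f \<omega> (real_of_ereal (Tstar A T H \<omega>)) 0 \<xi>2 0"
proof -
  have omc: "\<omega> \<in> canonical_space A" using om sp by simp
  have shM: "shift x t \<omega> \<in> space M" for x t using shift_cs[OF omc] sp by simp
  let ?Ai = "Amb_inf A H \<omega>"
  have finA: "finite ?Ai" using fin unfolding Tstar_def by (auto split: if_splits)
  have TS: "Tstar A T H \<omega> = (INF (x, t)\<in>?Ai. ereal t + T (shift x t \<omega>))"
    using finA unfolding Tstar_def by simp
  have le: "Tstar A T H \<omega> \<le> ereal t + T (shift x t \<omega>)" if "(x, t) \<in> ?Ai" for x t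
    unfolding TS using that by (rule INF_lower2) simp
  have Tfin: "T (shift x t \<omega>) \<noteq> - \<infinity>" if "(x, t) \<in> ?Ai" for x t
    using le[OF that] fin by auto
  have "Tstar A T H \<omega> \<le> ereal 0 + T (shift 0 0 \<omega>)" by (rule le[OF Amb_0_in])
  also have "\<dots> < 0" using Tneg om by (simp add: shift_0)
  finally have "Tstar A T H \<omega> < 0" .
  with fin obtain S where S: "Tstar A T H \<omega> = ereal S" by (cases "Tstar A T H \<omega>") auto
  define V1 where "V1 = evol A f \<omega> S \<xi>1"
  define V2 where "V2 = evol A f \<omega> S \<xi>2"
  have main: "before_val \<omega> S \<xi>1 V1 x t = before_val \<omega> S \<xi>2 V2 x t"
    if "(x, t) \<in> ?Ai" for x t
  proof -
    define k where "k = card {p \<in> ?Ai. snd p < t}"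
    show ?thesis using that k_def
    proof (induction k arbitrary: x t rule: less_induct)
      case (less k x t)
      from less.prems(1) obtain n where xtn: "(x, t) \<in> Amb A H \<omega> n" unfolding Amb_inf_def by blast
      have IH: "before_val \<omega> S \<xi>1 V1 x' t' = before_val \<omega> S \<xi>2 V2 x' t'"
        if "(x', t') \<in> ?Ai" "t' < t" for x' t'
      proof (rule less.IH[OF _ that(1) refl])
        have s1: "{p \<in> ?Ai. snd p < t'} \<subseteq> {p \<in> ?Ai. snd p < t}" using that by auto
        have s2: "(x', t') \<in> {p \<in> ?Ai. snd p < t}" "(x', t') \<notin> {p \<in> ?Ai. snd p < t'}" using that by auto
        have "{p \<in> ?Ai. snd p < t'} \<subset> {p \<in> ?Ai. snd p < t}"
          using s1 s2 by blast
        then show "card {p \<in> ?Ai. snd p < t'} < k"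
          unfolding less.prems(2) by (rule psubset_card_mono[rotated]) (use finA in simp)
      qed
      define \<omega>' where "\<omega>' = shift x t \<omega>"
      have om': "\<omega>' \<in> space M" unfolding \<omega>'_def by (rule shM)
      have om'c: "\<omega>' \<in> canonical_space A" using om' sp by simp
      obtain T' where T': "T \<omega>' = ereal T'"
        using Tfin[OF less.prems(1)] Tneg om' unfolding \<omega>'_def by (cases "T (shift x t \<omega>)") auto
      have T'neg: "T' < 0" using Tneg om' T' by auto
      define s1 where "s1 = T' + t"
      have Ss1: "S \<le> s1" using le[OF less.prems(1)] S T' unfolding \<omega>'_def s1_def by (simp add: add.commute)
      have s1t: "s1 \<le> t" using T'neg unfolding s1_def by simp
      define \<eta>1 where "\<eta>1 = (\<lambda>z. before_val \<omega> S \<xi>1 V1 z s1)"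
      define \<eta>2 where "\<eta>2 = (\<lambda>z. before_val \<omega> S \<xi>2 V2 z s1)"
      have flow1: "before_val \<omega> S \<xi>1 V1 w v = before_val \<omega> s1 \<eta>1 (evol A f \<omega> s1 \<eta>1) w v" if "s1 \<le> v" for w v
        unfolding V1_def \<eta>1_def V1_def by (rule flow[OF omc Ss1 that])
      have flow2: "before_val \<omega> S \<xi>2 V2 w v = before_val \<omega> s1 \<eta>2 (evol A f \<omega> s1 \<eta>2) w v" if "s1 \<le> v" for w v
        unfolding V2_def \<eta>2_def V2_def by (rule flow[OF omc Ss1 that])
      have PB: "Phi_before A f \<omega>' T' 0 (\<lambda>w. \<eta> (w + x)) 0 = before_val \<omega> s1 \<eta> (evol A f \<omega> s1 \<eta>) x t" for \<eta>
      proof -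
        have ev: "evol A f \<omega>' T' (\<lambda>w. \<eta> (w + x)) = (\<lambda>z u. evol A f \<omega> (T' + t) \<eta> (z + x) (u + t))"
          unfolding \<omega>'_def by (intro ext) (simp add: evol_shift[OF omc])
        have "Phi_before A f \<omega>' T' 0 (\<lambda>w. \<eta> (w + x)) 0
            = before_val \<omega>' T' (\<lambda>w. \<eta> (w + x)) (evol A f \<omega>' T' (\<lambda>w. \<eta> (w + x))) 0 0"
          by (simp add: Phi_before_def)
        also have "\<dots> = before_val \<omega>' T' (\<lambda>w. \<eta> (w + x)) (\<lambda>z u. evol A f \<omega> (T' + t) \<eta> (z + x) (u + t)) 0 0"
          by (simp only: ev)
        also have "\<dots> = before_val \<omega> (T' + t) (\<lambda>w. \<eta> (w - x + x)) (evol A f \<omega> (T' + t) \<eta>) (0 + x) (0 + t)"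
          unfolding \<omega>'_def by (rule bv_shift[OF omc])
        finally show ?thesis by (simp add: s1_def)
      qed
      have EV: "e_val A f \<omega>' \<alpha> T' (\<lambda>w. \<eta> (w + x)) = evol A f \<omega> s1 \<eta> (fst \<alpha> + x) (snd (snd \<alpha>) + t)" for \<alpha> \<eta>
        unfolding e_val_def Phi_def \<omega>'_def
        by (cases \<alpha>) (simp add: evol_shift[OF omc] s1_def)
      have "Phi_before A f \<omega>' (real_of_ereal (T \<omega>')) 0 (\<lambda>w. \<eta>1 (w + x)) 0
          = Phi_before A f \<omega>' (real_of_ereal (T \<omega>')) 0 (\<lambda>w. \<eta>2 (w + x)) 0"
      proof (rule coal[rule_format, OF om'])
        show "T \<omega>' \<noteq> - \<infinity>" using T' by simp
        fix \<alpha> assume a: "\<alpha> \<in> H \<omega>'"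
        obtain w i u where \<alpha>: "\<alpha> = (w, i, u)" by (cases \<alpha>)
        have "\<alpha> \<in> Pt \<omega>' (T \<omega>')" using Hsub om' a by blast
        then have wiu: "(w, i, u) \<in> \<omega>'" "T' \<le> u" "u < 0" using T' by (auto simp: Pt_def time_def \<alpha>)
        have pt: "(w + x, i, u + t) \<in> \<omega>" using wiu(1) unfolding \<omega>'_def shift_mem .
        have s1u: "s1 \<le> u + t" using wiu(2) unfolding s1_def by simp
        have inA: "(w + x + y, u + t) \<in> ?Ai" if "y \<in> A i" for y
          unfolding Amb_inf_def using Amb_Suc_I[OF xtn a[unfolded \<alpha> \<omega>'_def] that] by blast
        have "e_val A f \<omega>' \<alpha> T' (\<lambda>w. \<eta>1 (w + x))
            = f i (\<lambda>y\<in>A i. before_val \<omega> S \<xi>1 V1 (w + x + y) (u + t))"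
          unfolding EV \<alpha> using evol_at_point[OF omc pt s1u, of f \<eta>1] flow1[OF s1u] by simp
        also have "\<dots> = f i (\<lambda>y\<in>A i. before_val \<omega> S \<xi>2 V2 (w + x + y) (u + t))"
          using IH[OF inA] wiu(3) by (intro arg_cong[where f = "f i"] restrict_ext) simp
        also have "\<dots> = e_val A f \<omega>' \<alpha> T' (\<lambda>w. \<eta>2 (w + x))"
          unfolding EV \<alpha> using evol_at_point[OF omc pt s1u, of f \<eta>2] flow2[OF s1u] by simp
        finally show "e_val A f \<omega>' \<alpha> (real_of_ereal (T \<omega>')) (\<lambda>w. \<eta>1 (w + x))
           = e_val A f \<omega>' \<alpha> (real_of_ereal (T \<omega>')) (\<lambda>w. \<eta>2 (w + x))" using T' by simp
      qed
      then have "before_val \<omega> s1 \<eta>1 (evol A f \<omega> s1 \<eta>1) x t = before_val \<omega> s1 \<eta>2 (evol A f \<omega> s1 \<eta>2) x t"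
        using PB T' by simp
      then show ?case using flow1[OF s1t] flow2[OF s1t] by simp
    qed
  qed
  show ?thesis using main[OF Amb_0_in] S unfolding Phi_before_def V1_def V2_def by simp
qed


lemma card_box: "card (\<omega> \<inter> box v j U) = card {s. (v, j, s) \<in> \<omega> \<and> s \<in> U}"
proof -
  have "\<omega> \<inter> box v j U = (\<lambda>s. (v, j, s)) ` {s. (v, j, s) \<in> \<omega> \<and> s \<in> U}"
    unfolding box_def by auto
  moreover have "inj (\<lambda>s::real. (v, j, s))" by (rule injI) simp
  ultimately show ?thesis by (simp add: card_image inj_on_subset)
qed

lemma bounded_real_sub: "bounded (U::real set) \<Longrightarrow> \<exists>a b. U \<subseteq> {a..b}"
proof -
  assume "bounded U"
  then obtain a where "U \<subseteq> cbox (-a) a" using bounded_subset_cbox_symmetric by blast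
  then have "U \<subseteq> {-a..a}" by (simp add: box_real)
  then show ?thesis by blast
qed

lemma finite_box:
  assumes "\<omega> \<in> canonical_space A" "bounded U"
  shows "finite {s. (v, j, s) \<in> \<omega> \<and> s \<in> U}"
proof -
  obtain a b where "U \<subseteq> {a..b}" using bounded_real_sub[OF assms(2)] by blast
  then have "{s. (v, j, s) \<in> \<omega> \<and> s \<in> U} \<subseteq> {t. (v, j, t) \<in> \<omega> \<and> a \<le> t \<and> t \<le> b}" by auto
  then show ?thesis using cs_lf[OF assms(1)] finite_subset by blast
qed

lemma bdd_Icc: "bounded {a..b::real}"
  by (rule compact_imp_bounded[OF compact_Icc])

lemma bdd_Ico: "bounded {a..<b::real}"
  by (rule bounded_subset[OF bdd_Icc[of a b]]) auto

lemma bdd_Ico_Int: "bounded ({a..<b::real} \<inter> X)"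
  by (rule bounded_subset[OF bdd_Ico[of a b]]) auto

definition valid :: "(int ^ 'd::finite) \<times> 'i \<times> rat \<times> rat \<Rightarrow> ('d, 'i) pt set \<Rightarrow> bool" where
  "valid \<sigma> \<omega> = (case \<sigma> of (v, j, a, b) \<Rightarrow> card {s. (v, j, s) \<in> \<omega> \<and> s \<in> {real_of_rat a..<real_of_rat b}} = 1)"

definition qs :: "(int ^ 'd::finite) \<times> 'i \<times> rat \<times> rat \<Rightarrow> ('d, 'i) pt set \<Rightarrow> real" where
  "qs \<sigma> \<omega> = (case \<sigma> of (v, j, a, b) \<Rightarrow>
     if valid \<sigma> \<omega> then (THE s. (v, j, s) \<in> \<omega> \<and> s \<in> {real_of_rat a..<real_of_rat b}) else real_of_rat a)"

lemma valid_qs: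
  assumes "valid (v, j, a, b) \<omega>"
  shows "{s. (v, j, s) \<in> \<omega> \<and> s \<in> {real_of_rat a..<real_of_rat b}} = {qs (v, j, a, b) \<omega>}"
proof -
  obtain s0 where s0: "{s. (v, j, s) \<in> \<omega> \<and> s \<in> {real_of_rat a..<real_of_rat b}} = {s0}"
    using assms unfolding valid_def by (auto simp: card_1_singleton_iff)
  then have "(THE s. (v, j, s) \<in> \<omega> \<and> s \<in> {real_of_rat a..<real_of_rat b}) = s0"
    by (intro the_equality) (auto simp: set_eq_iff)
  then show ?thesis using s0 assms unfolding qs_def by simp
qed

lemma valid_qs_mem:
  assumes "valid (v, j, a, b) \<omega>"
  shows "(v, j, qs (v, j, a, b) \<omega>) \<in> \<omega>"
  using valid_qs[OF assms] by blast

lemma exists_slot: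
  assumes om: "\<omega> \<in> canonical_space A" and p: "(v, j, t) \<in> \<omega>"
  shows "\<exists>a b. valid (v, j, a, b) \<omega> \<and> qs (v, j, a, b) \<omega> = t"
proof -
  define F where "F = {s. (v, j, s) \<in> \<omega> \<and> t - 1 \<le> s \<and> s \<le> t + 1} - {t}"
  have fF: "finite F" unfolding F_def using cs_lf[OF om] by blast
  define \<delta> where "\<delta> = Min (insert 1 ((\<lambda>s. \<bar>s - t\<bar>) ` F))"
  have \<delta>pos: "\<delta> > 0" unfolding \<delta>_def using fF by (subst Min_gr_iff) (auto simp: F_def)
  have \<delta>1: "\<delta> \<le> 1" unfolding \<delta>_def using fF by simp
  have \<delta>F: "\<delta> \<le> \<bar>s - t\<bar>" if "s \<in> F" for s unfolding \<delta>_def using fF that by simp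
  obtain ra where ra: "ra \<in> \<rat>" "t - \<delta> < ra" "ra < t" using Rats_dense_in_real[of "t - \<delta>" t] \<delta>pos by auto
  obtain rb where rb: "rb \<in> \<rat>" "t < rb" "rb < t + \<delta>" using Rats_dense_in_real[of t "t + \<delta>"] \<delta>pos by auto
  obtain a where a: "ra = real_of_rat a" using ra(1) Rats_cases by blast
  obtain b where b: "rb = real_of_rat b" using rb(1) Rats_cases by blast
  have S: "{s. (v, j, s) \<in> \<omega> \<and> s \<in> {real_of_rat a..<real_of_rat b}} = {t}"
  proof (intro set_eqI iffI)
    fix s assume s: "s \<in> {s. (v, j, s) \<in> \<omega> \<and> s \<in> {real_of_rat a..<real_of_rat b}}"
    show "s \<in> {t}"
    proof (rule ccontr)
      assume "s \<notin> {t}"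
      then have "s \<in> F" using s ra rb a b \<delta>1 unfolding F_def by auto
      then have "\<delta> \<le> \<bar>s - t\<bar>" by (rule \<delta>F)
      then show False using s ra rb a b by auto
    qed
  next
    fix s assume "s \<in> {t}" then show "s \<in> {s. (v, j, s) \<in> \<omega> \<and> s \<in> {real_of_rat a..<real_of_rat b}}"
      using p ra rb a b by auto
  qed
  have val: "valid (v, j, a, b) \<omega>" unfolding valid_def using S by simp
  have "qs (v, j, a, b) \<omega> = t" using valid_qs[OF val] S by blast
  with val show ?thesis by blast
qed

locale pp =
  fixes A :: "'i::finite \<Rightarrow> (int ^ 'd::finite) set" and M :: "('d, 'i) pt set measure"
  assumes sp: "space M = canonical_space A"
    and st: "sets M = sigma_sets (canonical_space A) (count_gen (canonical_space A) {U. U \<in> sets borel \<and> bounded U})"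
begin

lemma gen_sets:
  assumes "U \<in> sets borel" "bounded U"
  shows "{\<omega> \<in> space M. card {s. (v, j, s) \<in> \<omega> \<and> s \<in> U} = k} \<in> sets M"
proof -
  have "{\<omega> \<in> space M. card {s. (v, j, s) \<in> \<omega> \<and> s \<in> U} = k} = {\<omega> \<in> canonical_space A. card (\<omega> \<inter> box v j U) = k}"
    by (simp add: sp card_box)
  also have "\<dots> \<in> count_gen (canonical_space A) {U. U \<in> sets borel \<and> bounded U}"
    unfolding count_gen_def mem_Collect_eq
    by (rule exI[of _ v], rule exI[of _ j], rule exI[of _ U], rule exI[of _ k]) (simp add: assms)
  finally show ?thesis unfolding st by (rule sigma_sets.Basic)
qed

lemma cnt_meas:
  assumes "U \<in> sets borel" "bounded U"
  shows "(\<lambda>\<omega>. card {s. (v, j, s) \<in> \<omega> \<and> s \<in> U}) \<in> measurable M (count_space UNIV)"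
  unfolding measurable_count_space_eq2_countable
proof (intro conjI ballI)
  fix k :: nat
  have "(\<lambda>\<omega>. card {s. (v, j, s) \<in> \<omega> \<and> s \<in> U}) -` {k} \<inter> space M = {\<omega> \<in> space M. card {s. (v, j, s) \<in> \<omega> \<and> s \<in> U} = k}"
    by auto
  then show "(\<lambda>\<omega>. card {s. (v, j, s) \<in> \<omega> \<and> s \<in> U}) -` {k} \<inter> space M \<in> sets M" using gen_sets[OF assms] by simp
qed auto

lemma cnt_real_meas:
  assumes "U \<in> sets borel" "bounded U"
  shows "(\<lambda>\<omega>. real (card {s. (v, j, s) \<in> \<omega> \<and> s \<in> U})) \<in> borel_measurable M"
  using cnt_meas[OF assms, of v j] by (rule measurable_compose) simp

lemma valid_pred: fixes \<sigma> :: "(int ^ 'd) \<times> 'i \<times> rat \<times> rat" shows "{\<omega> \<in> space M. valid \<sigma> \<omega>} \<in> sets M"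
proof -
  obtain v j a b where \<sigma>: "\<sigma> = (v, j, a, b)" by (cases \<sigma>) auto
  have "{\<omega> \<in> space M. valid \<sigma> \<omega>} = {\<omega> \<in> space M. card {s. (v, j, s) \<in> \<omega> \<and> s \<in> {real_of_rat a..<real_of_rat b}} = 1}"
    by (simp add: valid_def \<sigma>)
  also have "\<dots> \<in> sets M" by (rule gen_sets) auto
  finally show ?thesis .
qed

lemma valid_card_lt:
  assumes "valid (v, j, a, b) \<omega>"
  shows "card {s. (v, j, s) \<in> \<omega> \<and> s \<in> {real_of_rat a..<real_of_rat b} \<inter> {..<c}} = 1 \<longleftrightarrow> qs (v, j, a, b) \<omega> < c"
proof -
  have "{s. (v, j, s) \<in> \<omega> \<and> s \<in> {real_of_rat a..<real_of_rat b} \<inter> {..<c}}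
      = {s. (v, j, s) \<in> \<omega> \<and> s \<in> {real_of_rat a..<real_of_rat b}} \<inter> {..<c}" by blast
  also have "\<dots> = {qs (v, j, a, b) \<omega>} \<inter> {..<c}" using valid_qs[OF assms] by simp
  finally have E: "{s. (v, j, s) \<in> \<omega> \<and> s \<in> {real_of_rat a..<real_of_rat b} \<inter> {..<c}} = {qs (v, j, a, b) \<omega>} \<inter> {..<c}" .
  show ?thesis unfolding E by (cases "qs (v, j, a, b) \<omega> < c") auto
qed

lemma qs_meas: fixes \<sigma> :: "(int ^ 'd) \<times> 'i \<times> rat \<times> rat" shows "qs \<sigma> \<in> borel_measurable M"
proof -
  obtain v j a b where \<sigma>: "\<sigma> = (v, j, a, b)" by (cases \<sigma>) auto
  show ?thesis unfolding borel_measurable_iff_less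
  proof
    fix c :: real
    let ?C = "\<lambda>\<omega>. card {s. (v, j, s) \<in> \<omega> \<and> s \<in> {real_of_rat a..<real_of_rat b} \<inter> {..<c}} = 1"
    have eq: "qs \<sigma> \<omega> < c \<longleftrightarrow> (?C \<omega> \<and> valid \<sigma> \<omega>) \<or> (\<not> valid \<sigma> \<omega> \<and> real_of_rat a < c)" for \<omega>
    proof (cases "valid \<sigma> \<omega>")
      case True then show ?thesis using valid_card_lt[of v j a b \<omega> c] by (simp add: \<sigma>)
    next
      case False then show ?thesis by (simp add: qs_def \<sigma>)
    qed
    have "{\<omega> \<in> space M. qs \<sigma> \<omega> < c} =
       ({\<omega> \<in> space M. ?C \<omega>} \<inter> {\<omega> \<in> space M. valid \<sigma> \<omega>})
       \<union> ((space M - {\<omega> \<in> space M. valid \<sigma> \<omega>}) \<inter> {\<omega> \<in> space M. real_of_rat a < c})"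
      unfolding eq by blast
    also have "\<dots> \<in> sets M"
    proof (intro sets.Un sets.Int sets.Diff)
      show "{\<omega> \<in> space M. ?C \<omega>} \<in> sets M" by (rule gen_sets) (auto simp: bdd_Ico_Int)
      show "{\<omega> \<in> space M. valid \<sigma> \<omega>} \<in> sets M" by (rule valid_pred)
      show "{\<omega> \<in> space M. valid \<sigma> \<omega>} \<in> sets M" by (rule valid_pred)
      show "space M \<in> sets M" by simp
      show "{\<omega> \<in> space M. real_of_rat a < c} \<in> sets M" by (cases "real_of_rat a < c") simp_all
    qed
    finally show "{\<omega> \<in> space M. qs \<sigma> \<omega> < c} \<in> sets M" .
  qed
qed
end


lemma rn_le: "real_of_int \<lfloor>s0 * real (Suc n)\<rfloor> / real (Suc n) \<le> s0"
proof -
  have "real_of_int \<lfloor>s0 * real (Suc n)\<rfloor> \<le> s0 * real (Suc n)" by (rule of_int_floor_le)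
  then show ?thesis by (simp add: divide_le_eq)
qed

lemma rn_gt: "s0 - inverse (real (Suc n)) < real_of_int \<lfloor>s0 * real (Suc n)\<rfloor> / real (Suc n)"
proof -
  have "s0 * real (Suc n) - 1 < real_of_int \<lfloor>s0 * real (Suc n)\<rfloor>" by linarith
  then have "(s0 * real (Suc n) - 1) / real (Suc n) < real_of_int \<lfloor>s0 * real (Suc n)\<rfloor> / real (Suc n)"
    by (simp add: divide_strict_right_mono)
  moreover have "(s0 * real (Suc n) - 1) / real (Suc n) = s0 - inverse (real (Suc n))"
    by (simp add: field_simps)
  ultimately show ?thesis by simp
qed

lemma rn_ev: "x < s0 \<Longrightarrow> eventually (\<lambda>n. x < real_of_int \<lfloor>s0 * real (Suc n)\<rfloor> / real (Suc n)) sequentially"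
proof -
  assume xs: "x < s0"
  have "eventually (\<lambda>n. inverse (real (Suc n)) < s0 - x) sequentially"
    by (rule order_tendstoD(2)[OF LIMSEQ_inverse_real_of_nat]) (use xs in simp)
  then show ?thesis
  proof (rule eventually_mono)
    fix n assume "inverse (real (Suc n)) < s0 - x"
    then show "x < real_of_int \<lfloor>s0 * real (Suc n)\<rfloor> / real (Suc n)" using rn_gt[of s0 n] by linarith
  qed
qed

lemma card_shift:
  "card {u. (z, i, u) \<in> shift x t \<omega> \<and> u \<in> U} = card {s. (z + x, i, s) \<in> \<omega> \<and> s - t \<in> U}"
proof -
  have "{u. (z, i, u) \<in> shift x t \<omega> \<and> u \<in> U} = (\<lambda>s. s - t) ` {s. (z + x, i, s) \<in> \<omega> \<and> s - t \<in> U}"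
    by (rule shift_sets_eq)
  moreover have "inj (\<lambda>s::real. s - t)" by (rule injI) simp
  ultimately show ?thesis by (simp add: card_image inj_on_subset)
qed

context pp begin

definition CS :: "int ^ 'd \<Rightarrow> 'i \<Rightarrow> real set \<Rightarrow> ('d, 'i) pt set \<times> real \<Rightarrow> real" where
  "CS v j U p = real (card {s. (v, j, s) \<in> fst p \<and> s - snd p \<in> U})"

lemma CS_base: "CS v j {c..<d} \<in> borel_measurable (M \<Otimes>\<^sub>M borel)"
proof -
  define r where "r = (\<lambda>n (p :: ('d, 'i) pt set \<times> real). real_of_int \<lfloor>snd p * real (Suc n)\<rfloor> / real (Suc n))"
  define g where "g = (\<lambda>n p. real (card {s. (v, j, s) \<in> fst p \<and> s \<in> {c + r n p..<d + r n p}}))"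
  have gm: "g n \<in> borel_measurable (M \<Otimes>\<^sub>M borel)" for n
  proof -
    let ?h = "\<lambda>(m::int) (p :: ('d, 'i) pt set \<times> real). real (card {s. (v, j, s) \<in> fst p \<and> s \<in> {c + real_of_int m / real (Suc n)..<d + real_of_int m / real (Suc n)}})"
    have "(\<lambda>p. ?h (\<lfloor>snd p * real (Suc n)\<rfloor>) p) \<in> borel_measurable (M \<Otimes>\<^sub>M borel)"
    proof (rule measurable_compose_countable[where f = ?h])
      fix m :: int
      have "(\<lambda>\<omega>. real (card {s. (v, j, s) \<in> \<omega> \<and> s \<in> {c + real_of_int m / real (Suc n)..<d + real_of_int m / real (Suc n)}}))
           \<in> borel_measurable M" by (rule cnt_real_meas) (auto simp: bdd_Ico)
      then show "?h m \<in> borel_measurable (M \<Otimes>\<^sub>M borel)" by (rule measurable_compose[OF measurable_fst])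
    next
      show "(\<lambda>p. \<lfloor>snd p * real (Suc n)\<rfloor>) \<in> measurable (M \<Otimes>\<^sub>M borel) (count_space UNIV)"
        by measurable
    qed
    then show ?thesis unfolding g_def r_def by simp
  qed
  have conv: "(\<lambda>n. g n p) \<longlonglongrightarrow> CS v j {c..<d} p" if p: "p \<in> space (M \<Otimes>\<^sub>M borel)" for p
  proof -
    obtain \<omega> s0 where p': "p = (\<omega>, s0)" by (cases p)
    have om: "\<omega> \<in> canonical_space A" using p p' sp by (simp add: space_pair_measure)
    define F where "F = {s. (v, j, s) \<in> \<omega> \<and> c + s0 - 1 \<le> s \<and> s \<le> d + s0}"
    have fF: "finite F" unfolding F_def using cs_lf[OF om] by blast
    have rl: "r n p \<le> s0" "s0 - 1 < r n p" for n
    proof -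
      have a: "inverse (real (Suc n)) \<le> 1" by (simp add: inverse_le_1_iff)
      have b: "r n p = real_of_int \<lfloor>s0 * real (Suc n)\<rfloor> / real (Suc n)" unfolding r_def p' by simp
      show "r n p \<le> s0" unfolding b by (rule rn_le)
      show "s0 - 1 < r n p" unfolding b using rn_gt[of s0 n] a by linarith
    qed
    have ev1: "eventually (\<lambda>n. (c + r n p \<le> s \<longleftrightarrow> c + s0 \<le> s) \<and> (s < d + r n p \<longleftrightarrow> s < d + s0)) sequentially" for s
    proof -
      have e1: "eventually (\<lambda>n. c + r n p \<le> s \<longleftrightarrow> c + s0 \<le> s) sequentially"
      proof (cases "c + s0 \<le> s")
        case True
        show ?thesis
        proof (intro always_eventually allI)
          fix n show "c + r n p \<le> s \<longleftrightarrow> c + s0 \<le> s" using rl(1)[of n] True by linarith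
        qed
      next
        case False
        then have "eventually (\<lambda>n. s - c < r n p) sequentially" unfolding r_def p' by (intro rn_ev) simp
        then show ?thesis by (rule eventually_mono) (use False in auto)
      qed
      have e2: "eventually (\<lambda>n. s < d + r n p \<longleftrightarrow> s < d + s0) sequentially"
      proof (cases "s < d + s0")
        case True
        then have "eventually (\<lambda>n. s - d < r n p) sequentially" unfolding r_def p' by (intro rn_ev) simp
        then show ?thesis by (rule eventually_mono) (use True in auto)
      next
        case False
        show ?thesis
        proof (intro always_eventually allI)
          fix n show "s < d + r n p \<longleftrightarrow> s < d + s0" using rl(1)[of n] False by linarith
        qed
      qed
      show ?thesis using e1 e2 by (rule eventually_conj)
    qed
    have "eventually (\<lambda>n. \<forall>s\<in>F. (c + r n p \<le> s \<longleftrightarrow> c + s0 \<le> s) \<and> (s < d + r n p \<longleftrightarrow> s < d + s0)) sequentially"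
      using fF ev1 by (simp add: eventually_ball_finite)
    then have "eventually (\<lambda>n. g n p = CS v j {c..<d} p) sequentially"
    proof (rule eventually_mono)
      fix n assume H: "\<forall>s\<in>F. (c + r n p \<le> s \<longleftrightarrow> c + s0 \<le> s) \<and> (s < d + r n p \<longleftrightarrow> s < d + s0)"
      have "{s. (v, j, s) \<in> \<omega> \<and> s \<in> {c + r n p..<d + r n p}} = {s. (v, j, s) \<in> \<omega> \<and> s - s0 \<in> {c..<d}}"
      proof (intro set_eqI iffI)
        fix s assume s: "s \<in> {s. (v, j, s) \<in> \<omega> \<and> s \<in> {c + r n p..<d + r n p}}"
        then have "s \<in> F" unfolding F_def using rl[of n] by auto
        then show "s \<in> {s. (v, j, s) \<in> \<omega> \<and> s - s0 \<in> {c..<d}}" using H s by auto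
      next
        fix s assume s: "s \<in> {s. (v, j, s) \<in> \<omega> \<and> s - s0 \<in> {c..<d}}"
        then have "s \<in> F" unfolding F_def by auto
        then show "s \<in> {s. (v, j, s) \<in> \<omega> \<and> s \<in> {c + r n p..<d + r n p}}" using H s by auto
      qed
      then show "g n p = CS v j {c..<d} p" unfolding g_def CS_def p' by simp
    qed
    then show ?thesis by (rule tendsto_eventually)
  qed
  show ?thesis by (rule borel_measurable_LIMSEQ_real[OF conv gm])
qed

end


lemma Int_stable_lessThan: "Int_stable (range (lessThan :: real \<Rightarrow> real set))"
  unfolding Int_stable_def
proof (intro ballI)
  fix X Y assume "X \<in> range (lessThan :: real \<Rightarrow> real set)" "Y \<in> range (lessThan :: real \<Rightarrow> real set)"
  then obtain a b where "X = {..<a}" "Y = {..<b}" by auto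
  then have "X \<inter> Y = {..<min a b}" by auto
  then show "X \<inter> Y \<in> range lessThan" by blast
qed

lemma sets_borel_Iio: "sets (borel :: real measure) = sigma_sets UNIV (range lessThan)"
  by (subst borel_Iio) (simp add: sets_measure_of)

context pp begin

lemma finW:
  assumes "\<omega> \<in> canonical_space A"
  shows "finite {s. (v, j, s) \<in> \<omega> \<and> s - t \<in> X \<inter> {a..<b}}"
proof -
  have "{s. (v, j, s) \<in> \<omega> \<and> s - t \<in> X \<inter> {a..<b}} \<subseteq> {s. (v, j, s) \<in> \<omega> \<and> a + t \<le> s \<and> s \<le> b + t}" by auto
  then show ?thesis using cs_lf[OF assms] finite_subset by blast
qed

lemma CS_W_meas:
  assumes U: "U \<in> sets borel"
  shows "CS v j (U \<inter> {- real N..<real N}) \<in> borel_measurable (M \<Otimes>\<^sub>M borel)"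
proof -
  define W where "W = {- real N..<real N}"
  have spc: "p \<in> space (M \<Otimes>\<^sub>M borel) \<Longrightarrow> fst p \<in> canonical_space A" for p
    by (auto simp: space_pair_measure sp)
  have Uin: "U \<in> sigma_sets UNIV (range lessThan)" using U by (simp add: sets_borel_Iio)
  have cl: "range (lessThan :: real \<Rightarrow> real set) \<subseteq> Pow UNIV" by simp
  from Int_stable_lessThan cl Uin show ?thesis unfolding W_def[symmetric]
  proof (induction U rule: sigma_sets_induct_disjoint)
    case (basic X)
    then obtain e where X: "X = {..<e}" by auto
    have "X \<inter> W = {- real N..<min e (real N)}" unfolding X W_def by auto
    then show ?case using CS_base by simp
  next
    case empty
    have "CS v j ({} \<inter> W) = (\<lambda>p. 0)" by (simp add: CS_def fun_eq_iff)
    then show ?case by simp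
  next
    case (compl X)
    have W: "CS v j W \<in> borel_measurable (M \<Otimes>\<^sub>M borel)" unfolding W_def by (rule CS_base)
    have eq: "CS v j ((UNIV - X) \<inter> W) p = CS v j W p - CS v j (X \<inter> W) p"
      if p: "p \<in> space (M \<Otimes>\<^sub>M borel)" for p
    proof -
      have f: "finite {s. (v, j, s) \<in> fst p \<and> s - snd p \<in> UNIV \<inter> W}" unfolding W_def by (rule finW[OF spc[OF p]])
      have "{s. (v, j, s) \<in> fst p \<and> s - snd p \<in> (UNIV - X) \<inter> W}
          = {s. (v, j, s) \<in> fst p \<and> s - snd p \<in> W} - {s. (v, j, s) \<in> fst p \<and> s - snd p \<in> X \<inter> W}" by auto
      moreover have "{s. (v, j, s) \<in> fst p \<and> s - snd p \<in> X \<inter> W} \<subseteq> {s. (v, j, s) \<in> fst p \<and> s - snd p \<in> W}" by auto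
      moreover have f': "finite {s. (v, j, s) \<in> fst p \<and> s - snd p \<in> W}" using f by simp
      ultimately show ?thesis unfolding CS_def
        by (simp add: card_Diff_subset finite_subset[OF _ f'] card_mono[OF f'] of_nat_diff)
    qed
    show ?case
      by (rule measurable_cong[THEN iffD2, OF eq]) (use W "compl.IH" in \<open>simp_all\<close>)
  next
    case (union X)
    define u where "u m p = (\<Sum>n<m. CS v j (X n \<inter> W) p)" for m p
    have um: "u m \<in> borel_measurable (M \<Otimes>\<^sub>M borel)" for m
      unfolding u_def using "union.IH" by (intro borel_measurable_sum) simp
    have conv: "(\<lambda>m. u m p) \<longlonglongrightarrow> CS v j ((\<Union>i. X i) \<inter> W) p" if p: "p \<in> space (M \<Otimes>\<^sub>M borel)" for p
    proof -
      define Y where "Y n = {s. (v, j, s) \<in> fst p \<and> s - snd p \<in> X n \<inter> W}" for n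
      define Z where "Z = {s. (v, j, s) \<in> fst p \<and> s - snd p \<in> (\<Union>i. X i) \<inter> W}"
      have fZ: "finite Z" unfolding Z_def W_def by (rule finW[OF spc[OF p]])
      have fY: "finite (Y n)" for n unfolding Y_def W_def by (rule finW[OF spc[OF p]])
      have disj: "Y n \<inter> Y n' = {}" if "n \<noteq> n'" for n n'
        using "union.hyps"(1) that unfolding Y_def disjoint_family_on_def by auto
      have ZY: "Z = (\<Union>n. Y n)" unfolding Z_def Y_def by auto
      have "\<forall>s\<in>Z. \<exists>n. s \<in> Y n" unfolding ZY by blast
      then obtain idx where idx: "\<And>s. s \<in> Z \<Longrightarrow> s \<in> Y (idx s)" by metis
      define m0 where "m0 = Suc (Max (insert 0 (idx ` Z)))"
      have "u m p = CS v j ((\<Union>i. X i) \<inter> W) p" if m: "m \<ge> m0" for m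
      proof -
        have "u m p = real (\<Sum>n<m. card (Y n))" unfolding u_def CS_def Y_def by simp
        also have "(\<Sum>n<m. card (Y n)) = card (\<Union>n<m. Y n)"
          by (rule card_UN_disjoint[symmetric]) (use fY disj in auto)
        also have "(\<Union>n<m. Y n) = Z"
        proof (intro set_eqI iffI)
          fix s assume "s \<in> Z"
          then have "idx s \<le> Max (insert 0 (idx ` Z))" using fZ by simp
          then have "idx s < m" using m unfolding m0_def by simp
          then show "s \<in> (\<Union>n<m. Y n)" using idx[OF \<open>s \<in> Z\<close>] by blast
        qed (auto simp: ZY)
        finally show ?thesis unfolding CS_def Z_def by simp
      qed
      then have "eventually (\<lambda>m. u m p = CS v j ((\<Union>i. X i) \<inter> W) p) sequentially"
        unfolding eventually_sequentially by blast
      then show ?thesis by (rule tendsto_eventually)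
    qed
    show ?case by (rule borel_measurable_LIMSEQ_real[OF conv um])
  qed
qed

lemma CS_meas:
  assumes U: "U \<in> sets borel" "bounded U"
  shows "CS v j U \<in> borel_measurable (M \<Otimes>\<^sub>M borel)"
proof -
  obtain a b where ab: "U \<subseteq> {a..b}" using bounded_real_sub[OF U(2)] by blast
  obtain N :: nat where N: "real N > max \<bar>a\<bar> \<bar>b\<bar>" using reals_Archimedean2 by blast
  have "x \<in> U \<Longrightarrow> - real N \<le> x \<and> x < real N" for x
  proof -
    assume "x \<in> U"
    then have "a \<le> x" "x \<le> b" using ab by auto
    then show ?thesis using N by (simp add: abs_less_iff)
  qed
  then have "U \<inter> {- real N..<real N} = U" by auto
  then show ?thesis using CS_W_meas[OF U(1), of v j N] by simp
qed

lemma shift_meas: "(\<lambda>p. shift x (snd p) (fst p)) \<in> measurable (M \<Otimes>\<^sub>M borel) M"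
proof (rule measurable_sigma_sets[OF st])
  show "count_gen (canonical_space A) {U. U \<in> sets borel \<and> bounded U} \<subseteq> Pow (canonical_space A)"
    unfolding count_gen_def by auto
  show "(\<lambda>p. shift x (snd p) (fst p)) \<in> space (M \<Otimes>\<^sub>M borel) \<rightarrow> canonical_space A"
    using shift_cs by (auto simp: space_pair_measure sp)
  fix Y assume "Y \<in> count_gen (canonical_space A) {U. U \<in> sets borel \<and> bounded U}"
  then obtain z i U k where Y: "Y = {\<omega> \<in> canonical_space A. card (\<omega> \<inter> box z i U) = k}"
    and U: "U \<in> sets borel" "bounded U" unfolding count_gen_def by blast
  have "(\<lambda>p. shift x (snd p) (fst p)) -` Y \<inter> space (M \<Otimes>\<^sub>M borel)
      = (CS (z + x) i U) -` {real k} \<inter> space (M \<Otimes>\<^sub>M borel)"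
    unfolding Y CS_def using shift_cs by (auto simp: space_pair_measure sp card_box card_shift)
  also have "\<dots> \<in> sets (M \<Otimes>\<^sub>M borel)"
    by (rule measurable_sets[OF CS_meas[OF U]]) simp
  finally show "(\<lambda>p. shift x (snd p) (fst p)) -` Y \<inter> space (M \<Otimes>\<^sub>M borel) \<in> sets (M \<Otimes>\<^sub>M borel)" .
qed

end


locale pph = pp A M for A :: "'i::finite \<Rightarrow> (int ^ 'd::finite) set" and M +
  fixes H :: "('d, 'i) pt set \<Rightarrow> ('d, 'i) pt set" and T :: "('d, 'i) pt set \<Rightarrow> ereal"
  assumes Hsub: "\<forall>\<omega>\<in>space M. H \<omega> \<subseteq> Pt \<omega> (T \<omega>)"
    and Hmeas: "\<forall>t::real. t < 0 \<longrightarrow> (\<forall>x i U k. U \<in> sets borel \<longrightarrow> U \<subseteq> {t..<0} \<longrightarrow>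
        {\<omega> \<in> space M. card (H \<omega> \<inter> Pt \<omega> (ereal t) \<inter> box x i U) = k}
          \<in> sets (F_sigma (space M) t))"
begin

lemma Fsig_sub: "sets (F_sigma (space M) t) \<subseteq> sets M"
proof -
  have G: "count_gen (space M) {U. U \<in> sets borel \<and> U \<subseteq> {t..<0}} \<subseteq> Pow (space M)"
    unfolding count_gen_def by auto
  have "count_gen (space M) {U. U \<in> sets borel \<and> U \<subseteq> {t..<0}}
     \<subseteq> count_gen (canonical_space A) {U. U \<in> sets borel \<and> bounded U}"
    unfolding count_gen_def sp by (auto intro: bounded_subset[OF bdd_Ico])
  then have "sigma_sets (space M) (count_gen (space M) {U. U \<in> sets borel \<and> U \<subseteq> {t..<0}}) \<subseteq> sets M"
    unfolding st sp by (rule sigma_sets_mono')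
  then show ?thesis unfolding F_sigma_def using G by (simp add: sets_measure_of)
qed

lemma H_in: "\<omega> \<in> space M \<Longrightarrow> (z, i, s) \<in> H \<omega> \<Longrightarrow> (z, i, s) \<in> \<omega> \<and> s < 0 \<and> T \<omega> \<le> ereal s"
  using Hsub by (force simp: Pt_def time_def)

lemma H_ne_sets: "{\<omega> \<in> space M. H \<omega> \<inter> box w i {\<alpha>..<\<beta>} \<noteq> {}} \<in> sets M"
proof (cases "\<alpha> < min \<beta> 0")
  case False
  have "{\<omega> \<in> space M. H \<omega> \<inter> box w i {\<alpha>..<\<beta>} \<noteq> {}} = {}"
  proof (intro set_eqI iffI)
    fix \<omega> assume "\<omega> \<in> {\<omega> \<in> space M. H \<omega> \<inter> box w i {\<alpha>..<\<beta>} \<noteq> {}}"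
    then obtain s where "\<omega> \<in> space M" "(w, i, s) \<in> H \<omega>" "\<alpha> \<le> s" "s < \<beta>" by (auto simp: box_def)
    then show "\<omega> \<in> {}" using H_in False by fastforce
  qed simp
  then show ?thesis by (simp only:) simp
next
  case True
  let ?U = "{\<alpha>..<min \<beta> 0}"
  have a0: "\<alpha> < 0" using True by simp
  have hyp: "{\<omega> \<in> space M. card (H \<omega> \<inter> Pt \<omega> (ereal \<alpha>) \<inter> box w i ?U) = 0} \<in> sets M"
  proof -
    have "?U \<in> sets borel" "?U \<subseteq> {\<alpha>..<0}" by auto
    then have "{\<omega> \<in> space M. card (H \<omega> \<inter> Pt \<omega> (ereal \<alpha>) \<inter> box w i ?U) = 0} \<in> sets (F_sigma (space M) \<alpha>)"
      using Hmeas a0 by blast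
    then show ?thesis using Fsig_sub by blast
  qed
  have eq: "H \<omega> \<inter> Pt \<omega> (ereal \<alpha>) \<inter> box w i ?U = H \<omega> \<inter> box w i {\<alpha>..<\<beta>}" if "\<omega> \<in> space M" for \<omega>
    using H_in[OF that] by (auto simp: Pt_def time_def box_def)
  have fin: "finite (H \<omega> \<inter> box w i {\<alpha>..<\<beta>})" if om: "\<omega> \<in> space M" for \<omega>
  proof -
    have "H \<omega> \<inter> box w i {\<alpha>..<\<beta>} \<subseteq> \<omega> \<inter> box w i {\<alpha>..<\<beta>}" using H_in[OF om] by auto
    moreover have "finite (\<omega> \<inter> box w i {\<alpha>..<\<beta>})"
    proof -
      have "\<omega> \<inter> box w i {\<alpha>..<\<beta>} = (\<lambda>s. (w, i, s)) ` {s. (w, i, s) \<in> \<omega> \<and> s \<in> {\<alpha>..<\<beta>}}"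
        unfolding box_def by auto
      then show ?thesis using finite_box[of \<omega> A "{\<alpha>..<\<beta>}" w i] om sp bdd_Ico by simp
    qed
    ultimately show ?thesis by (rule finite_subset)
  qed
  have "{\<omega> \<in> space M. H \<omega> \<inter> box w i {\<alpha>..<\<beta>} \<noteq> {}}
      = space M - {\<omega> \<in> space M. card (H \<omega> \<inter> Pt \<omega> (ereal \<alpha>) \<inter> box w i ?U) = 0}"
    using eq fin by auto
  then show ?thesis using hyp by simp
qed

lemma H_mem_pred: "(\<lambda>p. (w, i, snd p) \<in> H (fst p)) \<in> measurable (M \<Otimes>\<^sub>M borel) (count_space UNIV)"
proof -
  define h where "h = (\<lambda>(n::nat) (m::int) \<omega>. H \<omega> \<inter> box w i {real_of_int m / real (Suc n)..<(real_of_int m + 1) / real (Suc n)} \<noteq> {})"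
  have hm: "(\<lambda>p. h n \<lfloor>snd p * real (Suc n)\<rfloor> (fst p)) \<in> measurable (M \<Otimes>\<^sub>M borel) (count_space UNIV)" for n
  proof (rule measurable_compose_countable[where f = "\<lambda>m p. h n m (fst p)"])
    fix m
    have "{\<omega> \<in> space M. h n m \<omega>} \<in> sets M" unfolding h_def by (simp add: H_ne_sets)
    then have "h n m \<in> measurable M (count_space UNIV)" by (simp add: pred_def)
    then show "(\<lambda>p. h n m (fst p)) \<in> measurable (M \<Otimes>\<^sub>M borel) (count_space UNIV)"
      by (rule measurable_compose[OF measurable_fst])
  next
    show "(\<lambda>p. \<lfloor>snd p * real (Suc n)\<rfloor>) \<in> measurable (M \<Otimes>\<^sub>M borel) (count_space UNIV)"
      by measurable
  qed
  have eq: "(w, i, snd p) \<in> H (fst p) \<longleftrightarrow> (\<forall>n. h n \<lfloor>snd p * real (Suc n)\<rfloor> (fst p))"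
    if p: "p \<in> space (M \<Otimes>\<^sub>M borel)" for p
  proof -
    obtain \<omega> u where p': "p = (\<omega>, u)" by (cases p)
    have om: "\<omega> \<in> space M" using p p' by (simp add: space_pair_measure)
    have inI: "real_of_int \<lfloor>u * real (Suc n)\<rfloor> / real (Suc n) \<le> u \<and> u < (real_of_int \<lfloor>u * real (Suc n)\<rfloor> + 1) / real (Suc n)" for n
    proof
      show "real_of_int \<lfloor>u * real (Suc n)\<rfloor> / real (Suc n) \<le> u" by (rule rn_le)
      have "u * real (Suc n) < real_of_int \<lfloor>u * real (Suc n)\<rfloor> + 1" by linarith
      then show "u < (real_of_int \<lfloor>u * real (Suc n)\<rfloor> + 1) / real (Suc n)" by (simp add: field_simps)
    qed
    show ?thesis
    proof
      assume "(w, i, snd p) \<in> H (fst p)"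
      then have "(w, i, u) \<in> H \<omega>" using p' by simp
      then show "\<forall>n. h n \<lfloor>snd p * real (Suc n)\<rfloor> (fst p)" unfolding h_def p' using inI by (auto simp: box_def)
    next
      assume all: "\<forall>n. h n \<lfloor>snd p * real (Suc n)\<rfloor> (fst p)"
      show "(w, i, snd p) \<in> H (fst p)"
      proof (rule ccontr)
        assume nin: "(w, i, snd p) \<notin> H (fst p)"
        then have nin': "(w, i, u) \<notin> H \<omega>" using p' by simp
        define F where "F = {s. (w, i, s) \<in> H \<omega> \<and> u - 1 \<le> s \<and> s \<le> u + 1}"
        have fF: "finite F"
        proof -
          have "F \<subseteq> {s. (w, i, s) \<in> \<omega> \<and> u - 1 \<le> s \<and> s \<le> u + 1}" unfolding F_def using H_in[OF om] by auto
          moreover have "finite {s. (w, i, s) \<in> \<omega> \<and> u - 1 \<le> s \<and> s \<le> u + 1}"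
            using cs_lf[of \<omega> A] om sp by simp
          ultimately show ?thesis by (rule finite_subset)
        qed
        define \<epsilon> where "\<epsilon> = Min (insert 1 ((\<lambda>s. \<bar>s - u\<bar>) ` F))"
        have \<epsilon>pos: "\<epsilon> > 0" unfolding \<epsilon>_def using fF nin' by (subst Min_gr_iff) (auto simp: F_def)
        have \<epsilon>1: "\<epsilon> \<le> 1" unfolding \<epsilon>_def using fF by simp
        have \<epsilon>F: "\<epsilon> \<le> \<bar>s - u\<bar>" if "s \<in> F" for s unfolding \<epsilon>_def using fF that by simp
        obtain n where n: "inverse (real (Suc n)) < \<epsilon>" using reals_Archimedean[OF \<epsilon>pos] by blast
        have "h n \<lfloor>u * real (Suc n)\<rfloor> \<omega>" using all p' by simp
        then obtain s where s: "(w, i, s) \<in> H \<omega>" "real_of_int \<lfloor>u * real (Suc n)\<rfloor> / real (Suc n) \<le> s"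
          "s < (real_of_int \<lfloor>u * real (Suc n)\<rfloor> + 1) / real (Suc n)"
          unfolding h_def by (auto simp: box_def)
        have g: "u - inverse (real (Suc n)) < real_of_int \<lfloor>u * real (Suc n)\<rfloor> / real (Suc n)" by (rule rn_gt)
        have e: "(real_of_int \<lfloor>u * real (Suc n)\<rfloor> + 1) / real (Suc n) = real_of_int \<lfloor>u * real (Suc n)\<rfloor> / real (Suc n) + inverse (real (Suc n))"
          by (simp add: field_simps)
        have l: "real_of_int \<lfloor>u * real (Suc n)\<rfloor> / real (Suc n) \<le> u" by (rule rn_le)
        have close: "\<bar>s - u\<bar> < inverse (real (Suc n))" using s(2,3) g e l by (simp add: abs_less_iff)
        then have "s \<in> F" unfolding F_def using s(1) n \<epsilon>1 by (auto simp: abs_less_iff)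
        then have "\<epsilon> \<le> \<bar>s - u\<bar>" by (rule \<epsilon>F)
        then show False using close n by simp
      qed
    qed
  qed
  have [measurable]: "Measurable.pred (M \<Otimes>\<^sub>M borel) (\<lambda>p. h n \<lfloor>snd p * real (Suc n)\<rfloor> (fst p))" for n
    using hm by simp
  have "Measurable.pred (M \<Otimes>\<^sub>M borel) (\<lambda>p. \<forall>n. h n \<lfloor>snd p * real (Suc n)\<rfloor> (fst p))" by measurable
  then show ?thesis by (rule measurable_cong[THEN iffD2, rotated]) (simp add: eq)
qed

end


context pph begin

lemma shift_meas_comp[measurable (raw)]:
  "f \<in> measurable N M \<Longrightarrow> g \<in> borel_measurable N \<Longrightarrow> (\<lambda>z. shift x (g z) (f z)) \<in> measurable N M"
  using measurable_compose[OF measurable_Pair[of f N M g borel] shift_meas[of x]] by simp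

lemma H_mem_comp[measurable (raw)]:
  "f \<in> measurable N M \<Longrightarrow> g \<in> borel_measurable N \<Longrightarrow> (\<lambda>z. (w, i, g z) \<in> H (f z)) \<in> measurable N (count_space UNIV)"
  using measurable_compose[OF measurable_Pair[of f N M g borel] H_mem_pred[of w i]] by simp

lemma qs_comp[measurable (raw)]:
  "f \<in> measurable N M \<Longrightarrow> (\<lambda>z. qs \<sigma> (f z)) \<in> borel_measurable N"
  using measurable_compose[OF _ qs_meas] by blast

lemma valid_comp[measurable (raw)]:
  "f \<in> measurable N M \<Longrightarrow> (\<lambda>z. valid \<sigma> (f z)) \<in> measurable N (count_space UNIV)"
proof -
  assume f: "f \<in> measurable N M"
  have "valid \<sigma> \<in> measurable M (count_space UNIV)" using valid_pred[of \<sigma>] by (simp add: pred_def)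
  then show ?thesis using measurable_compose[OF f] by blast
qed

lemma shift_space: "\<omega> \<in> space M \<Longrightarrow> shift x t \<omega> \<in> space M"
  using shift_cs sp by auto

lemma Amb_time_pt:
  assumes om: "\<omega> \<in> space M" and xt: "(x, t) \<in> Amb A H \<omega> n"
  shows "t = 0 \<or> (\<exists>v j. (v, j, t) \<in> \<omega>)"
proof (cases n)
  case 0 then show ?thesis using xt by simp
next
  case (Suc m)
  from xt[unfolded Suc] obtain x' t' w i u y where a: "(x', t') \<in> Amb A H \<omega> m" "(w, i, u) \<in> H (shift x' t' \<omega>)"
    "(x, t) = (w + x' + y, u + t')" by (rule Amb_Suc_E)
  have "(w, i, u) \<in> shift x' t' \<omega>" using H_in[OF shift_space[OF om] a(2)] by simp
  then have "(w + x', i, u + t') \<in> \<omega>" by (simp add: shift_mem)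
  then show ?thesis using a(3) by auto
qed

lemma time_slot:
  assumes om: "\<omega> \<in> space M" and xt: "(x, t) \<in> Amb A H \<omega> n" and t0: "t \<noteq> 0"
  shows "\<exists>\<sigma>. valid \<sigma> \<omega> \<and> qs \<sigma> \<omega> = t"
proof -
  obtain v j where "(v, j, t) \<in> \<omega>" using Amb_time_pt[OF om xt] t0 by blast
  then obtain a b where "valid (v, j, a, b) \<omega> \<and> qs (v, j, a, b) \<omega> = t"
    using exists_slot[of \<omega> A] om sp by blast
  then show ?thesis by blast
qed

lemma Amb_Suc_iff:
  assumes om: "\<omega> \<in> space M"
  shows "(x, t) \<in> Amb A H \<omega> (Suc n) \<longleftrightarrow>
    (\<exists>x' i y. y \<in> A i \<and>
      (((x', 0) \<in> Amb A H \<omega> n \<and> (x - x' - y, i, t - 0) \<in> H (shift x' 0 \<omega>)) \<or>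
       (\<exists>\<sigma>::(int ^ 'd) \<times> 'i \<times> rat \<times> rat. valid \<sigma> \<omega> \<and> (x', qs \<sigma> \<omega>) \<in> Amb A H \<omega> n \<and>
           (x - x' - y, i, t - qs \<sigma> \<omega>) \<in> H (shift x' (qs \<sigma> \<omega>) \<omega>))))"
proof
  assume "(x, t) \<in> Amb A H \<omega> (Suc n)"
  then obtain x' t' w i u y where a: "(x', t') \<in> Amb A H \<omega> n" "(w, i, u) \<in> H (shift x' t' \<omega>)"
    "y \<in> A i" "(x, t) = (w + x' + y, u + t')" by (rule Amb_Suc_E)
  have w: "w = x - x' - y" and u: "u = t - t'" using a(4) by (auto simp: algebra_simps)
  show "\<exists>x' i y. y \<in> A i \<and>
      (((x', 0) \<in> Amb A H \<omega> n \<and> (x - x' - y, i, t - 0) \<in> H (shift x' 0 \<omega>)) \<or>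
       (\<exists>\<sigma>::(int ^ 'd) \<times> 'i \<times> rat \<times> rat. valid \<sigma> \<omega> \<and> (x', qs \<sigma> \<omega>) \<in> Amb A H \<omega> n \<and>
           (x - x' - y, i, t - qs \<sigma> \<omega>) \<in> H (shift x' (qs \<sigma> \<omega>) \<omega>)))"
  proof (cases "t' = 0")
    case True show ?thesis
      apply (rule exI[of _ x'], rule exI[of _ i], rule exI[of _ y]) using a w u True by auto
  next
    case False
    then obtain \<sigma> where \<sigma>: "valid \<sigma> \<omega>" "qs \<sigma> \<omega> = t'" using time_slot[OF om a(1)] by blast
    show ?thesis
      apply (rule exI[of _ x'], rule exI[of _ i], rule exI[of _ y], rule conjI[OF a(3)], rule disjI2, rule exI[of _ \<sigma>])
      using a w u \<sigma> by auto
  qed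
next
  assume "\<exists>x' i y. y \<in> A i \<and>
      (((x', 0) \<in> Amb A H \<omega> n \<and> (x - x' - y, i, t - 0) \<in> H (shift x' 0 \<omega>)) \<or>
       (\<exists>\<sigma>::(int ^ 'd) \<times> 'i \<times> rat \<times> rat. valid \<sigma> \<omega> \<and> (x', qs \<sigma> \<omega>) \<in> Amb A H \<omega> n \<and>
           (x - x' - y, i, t - qs \<sigma> \<omega>) \<in> H (shift x' (qs \<sigma> \<omega>) \<omega>)))"
  then obtain x' i y t' where "y \<in> A i" "(x', t') \<in> Amb A H \<omega> n" "(x - x' - y, i, t - t') \<in> H (shift x' t' \<omega>)"
    by blast
  from Amb_Suc_I[OF this(2,3,1)] show "(x, t) \<in> Amb A H \<omega> (Suc n)" by simp
qed

lemma Amb_pred: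
  "f \<in> measurable N M \<Longrightarrow> g \<in> borel_measurable N \<Longrightarrow>
     (\<lambda>z. (x, g z) \<in> Amb A H (f z) n) \<in> measurable N (count_space UNIV)"
proof (induction n arbitrary: x f g N)
  case 0
  have "Measurable.pred N (\<lambda>z. x = 0 \<and> g z = 0)" using "0.prems" by measurable
  then show ?case by simp
next
  case (Suc n)
  note [measurable] = Suc.prems
  have IH[measurable (raw)]: "Measurable.pred N (\<lambda>z. (x', g' z) \<in> Amb A H (f' z) n)"
    if "f' \<in> measurable N M" "g' \<in> borel_measurable N" for x' f' g' using that by (rule Suc.IH)
  have fs: "f z \<in> space M" if "z \<in> space N" for z using measurable_space[OF Suc.prems(1) that] .
  have "Measurable.pred N (\<lambda>z. \<exists>x' i y. y \<in> A i \<and>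
      (((x', 0) \<in> Amb A H (f z) n \<and> (x - x' - y, i, g z - 0) \<in> H (shift x' 0 (f z))) \<or>
       (\<exists>\<sigma>::(int ^ 'd) \<times> 'i \<times> rat \<times> rat. valid \<sigma> (f z) \<and> (x', qs \<sigma> (f z)) \<in> Amb A H (f z) n \<and>
           (x - x' - y, i, g z - qs \<sigma> (f z)) \<in> H (shift x' (qs \<sigma> (f z)) (f z)))))"
    by measurable
  then show ?case by (rule measurable_cong[THEN iffD1, rotated]) (simp del: Amb.simps add: Amb_Suc_iff fs)
qed

end


definition tau :: "((int ^ 'd::finite) \<times> 'i \<times> rat \<times> rat) option \<Rightarrow> ('d, 'i) pt set \<Rightarrow> real" where
  "tau ob \<omega> = (case ob of None \<Rightarrow> 0 | Some \<sigma> \<Rightarrow> qs \<sigma> \<omega>)"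

definition okk :: "((int ^ 'd::finite) \<times> 'i \<times> rat \<times> rat) option \<Rightarrow> ('d, 'i) pt set \<Rightarrow> bool" where
  "okk ob \<omega> = (case ob of None \<Rightarrow> True | Some \<sigma> \<Rightarrow> valid \<sigma> \<omega>)"

lemma INF_if_top: "(INF j\<in>J. h j) = (INF j. if j \<in> J then h j else (top::ereal))"
proof (rule antisym)
  show "(INF j\<in>J. h j) \<le> (INF j. if j \<in> J then h j else top)"
    by (rule INF_greatest) (auto intro: INF_lower)
  show "(INF j. if j \<in> J then h j else top) \<le> (INF j\<in>J. h j)"
  proof (rule INF_greatest)
    fix j assume "j \<in> J"
    then show "(INF j. if j \<in> J then h j else top) \<le> h j" by (intro INF_lower2[of j]) auto
  qed
qed

context pph begin

lemma Ambinf_pred[measurable (raw)]: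
  "f \<in> measurable N M \<Longrightarrow> g \<in> borel_measurable N \<Longrightarrow>
     (\<lambda>z. (x, g z) \<in> Amb_inf A H (f z)) \<in> measurable N (count_space UNIV)"
proof -
  assume [measurable]: "f \<in> measurable N M" "g \<in> borel_measurable N"
  have [measurable]: "Measurable.pred N (\<lambda>z. (x, g z) \<in> Amb A H (f z) n)" for n by (rule Amb_pred) measurable
  have "Measurable.pred N (\<lambda>z. \<exists>n. (x, g z) \<in> Amb A H (f z) n)" by measurable
  then show ?thesis unfolding Amb_inf_def by simp
qed

lemma Ambinf_image:
  assumes om: "\<omega> \<in> space M"
  shows "Amb_inf A H \<omega> = (\<lambda>(x, ob). (x, tau ob \<omega>)) ` {(x, ob). okk ob \<omega> \<and> (x, tau ob \<omega>) \<in> Amb_inf A H \<omega>}"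
proof (intro set_eqI iffI)
  fix p assume p: "p \<in> Amb_inf A H \<omega>"
  obtain x t where xt: "p = (x, t)" by (cases p)
  obtain n where n: "(x, t) \<in> Amb A H \<omega> n" using p xt unfolding Amb_inf_def by blast
  show "p \<in> (\<lambda>(x, ob). (x, tau ob \<omega>)) ` {(x, ob). okk ob \<omega> \<and> (x, tau ob \<omega>) \<in> Amb_inf A H \<omega>}"
  proof (cases "t = 0")
    case True
    then show ?thesis using p xt by (intro rev_image_eqI[of "(x, None)"]) (auto simp: tau_def okk_def)
  next
    case False
    then obtain \<sigma> where \<sigma>: "valid \<sigma> \<omega>" "qs \<sigma> \<omega> = t" using time_slot[OF om n] by blast
    then show ?thesis using p xt by (intro rev_image_eqI[of "(x, Some \<sigma>)"]) (auto simp: tau_def okk_def)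
  qed
qed auto

lemma G_meas:
  assumes Tm[measurable]: "T \<in> borel_measurable M"
  shows "(\<lambda>\<omega>. INF (x, t)\<in>Amb_inf A H \<omega>. ereal t + T (shift x t \<omega>)) \<in> borel_measurable M"
proof -
  define F where "F = (\<lambda>(j :: (int ^ 'd) \<times> ((int ^ 'd) \<times> 'i \<times> rat \<times> rat) option) \<omega>.
     if okk (snd j) \<omega> \<and> (fst j, tau (snd j) \<omega>) \<in> Amb_inf A H \<omega>
     then ereal (tau (snd j) \<omega>) + T (shift (fst j) (tau (snd j) \<omega>) \<omega>) else top)"
  have Fm: "F j \<in> borel_measurable M" for j
  proof -
    obtain x ob where j: "j = (x, ob)" by (cases j)
    show ?thesis
    proof (cases ob)
      case None
      have "F j = (\<lambda>\<omega>. if (x, 0) \<in> Amb_inf A H \<omega> then ereal 0 + T (shift x 0 \<omega>) else top)"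
        unfolding F_def j None by (simp add: tau_def okk_def cong: if_cong)
      also have "\<dots> \<in> borel_measurable M" by measurable
      finally show ?thesis .
    next
      case (Some \<sigma>)
      have "F j = (\<lambda>\<omega>. if valid \<sigma> \<omega> \<and> (x, qs \<sigma> \<omega>) \<in> Amb_inf A H \<omega> then ereal (qs \<sigma> \<omega>) + T (shift x (qs \<sigma> \<omega>) \<omega>) else top)"
        unfolding F_def j Some by (simp add: tau_def okk_def cong: if_cong)
      also have "\<dots> \<in> borel_measurable M" by measurable
      finally show ?thesis .
    qed
  qed
  have M1: "(\<lambda>\<omega>. INF j. F j \<omega>) \<in> borel_measurable M"
    by (rule borel_measurable_INF) (simp_all add: Fm)
  have EQ: "(INF (x, t)\<in>Amb_inf A H \<omega>. ereal t + T (shift x t \<omega>)) = (INF j. F j \<omega>)" if om: "\<omega> \<in> space M" for \<omega>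
  proof -
    have "(INF (x, t)\<in>Amb_inf A H \<omega>. ereal t + T (shift x t \<omega>))
        = (INF j\<in>{(x, ob). okk ob \<omega> \<and> (x, tau ob \<omega>) \<in> Amb_inf A H \<omega>}. (\<lambda>(x, t). ereal t + T (shift x t \<omega>)) ((\<lambda>(x, ob). (x, tau ob \<omega>)) j))"
      by (subst Ambinf_image[OF om]) (simp add: image_comp)
    also have "\<dots> = (INF j. F j \<omega>)"
      by (subst INF_if_top) (auto simp: F_def split_beta intro!: INF_cong)
    finally show ?thesis .
  qed
  show ?thesis using M1 by (subst measurable_cong[OF EQ])
qed

end


theorem mainTheorem9:
  fixes A :: "'i::finite \<Rightarrow> (int ^ 'd::finite) set"
    and f :: "'i \<Rightarrow> (int ^ 'd \<Rightarrow> 's::finite) \<Rightarrow> 's"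
    and r :: "'i \<Rightarrow> real"
    and M :: "('d, 'i) pt set measure"
    and T :: "('d, 'i) pt set \<Rightarrow> ereal"
    and H :: "('d, 'i) pt set \<Rightarrow> ('d, 'i) pt set"
  assumes "\<forall>i. finite (A i)"
    and "\<forall>i. r i \<ge> 0"
    and "poisson_process A r M"
    and "cftp_amb A f M T H"
    and "measure M {\<omega> \<in> space M. Tstar A T H \<omega> > - \<infinity>} = 1"
  shows "cftp_time A f M (Tstar A T H)"
proof -
  have PS: "prob_space M" and sp: "space M = canonical_space A"
    and st: "sets M = sigma_sets (canonical_space A) (count_gen (canonical_space A) {U. U \<in> sets borel \<and> bounded U})"
    using assms(3) unfolding poisson_process_def by auto
  have Tm: "T \<in> borel_measurable M" and Tneg: "\<forall>\<omega>\<in>space M. T \<omega> < 0"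
    and Hsub: "\<forall>\<omega>\<in>space M. H \<omega> \<subseteq> Pt \<omega> (T \<omega>)"
    and Hmeas: "\<forall>t::real. t < 0 \<longrightarrow> (\<forall>x i U k. U \<in> sets borel \<longrightarrow> U \<subseteq> {t..<0} \<longrightarrow>
        {\<omega> \<in> space M. card (H \<omega> \<inter> Pt \<omega> (ereal t) \<inter> box x i U) = k}
          \<in> sets (F_sigma (space M) t))"
    and coal: "\<forall>\<omega>\<in>space M. T \<omega> \<noteq> - \<infinity> \<longrightarrow>
        (\<forall>\<xi>1 \<xi>2. (\<forall>\<alpha>\<in>H \<omega>. e_val A f \<omega> \<alpha> (real_of_ereal (T \<omega>)) \<xi>1
                              = e_val A f \<omega> \<alpha> (real_of_ereal (T \<omega>)) \<xi>2)
           \<longrightarrow> Phi_before A f \<omega> (real_of_ereal (T \<omega>)) 0 \<xi>1 0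
               = Phi_before A f \<omega> (real_of_ereal (T \<omega>)) 0 \<xi>2 0)"
    using assms(4) unfolding cftp_amb_def by auto
  interpret pph A M H T
    by unfold_locales (use sp st Hsub Hmeas in auto)
  interpret P: prob_space M by (rule PS)
  define E where "E = {\<omega> \<in> space M. Tstar A T H \<omega> > - \<infinity>}"
  have E: "E \<in> sets M"
  proof (rule ccontr)
    assume "E \<notin> sets M"
    then have "measure M E = 0" by (rule measure_notin_sets)
    then show False using assms(5) unfolding E_def by simp
  qed
  define G where "G = (\<lambda>\<omega>. INF (x, t)\<in>Amb_inf A H \<omega>. ereal t + T (shift x t \<omega>))"
  have Gm: "G \<in> borel_measurable M" unfolding G_def by (rule G_meas[OF Tm])
  have eqT: "Tstar A T H \<omega> = (if \<omega> \<in> E then G \<omega> else - \<infinity>)" if om: "\<omega> \<in> space M" for \<omega>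
  proof (cases "\<omega> \<in> E")
    case True
    then have "Tstar A T H \<omega> \<noteq> - \<infinity>" unfolding E_def by auto
    then have "finite (Amb_inf A H \<omega>)" unfolding Tstar_def by (auto split: if_splits)
    then show ?thesis using True by (simp add: Tstar_def G_def)
  next
    case False
    then show ?thesis using om unfolding E_def by auto
  qed
  have meas: "Tstar A T H \<in> borel_measurable M"
  proof -
    have "(\<lambda>\<omega>. if \<omega> \<in> E then G \<omega> else - \<infinity>) \<in> borel_measurable M"
      by (rule measurable_If_set[OF Gm]) (use E in auto)
    then show ?thesis by (subst measurable_cong[OF eqT]) auto
  qed
  have neg: "\<forall>\<omega>\<in>space M. Tstar A T H \<omega> < 0"
  proof
    fix \<omega> assume om: "\<omega> \<in> space M"
    show "Tstar A T H \<omega> < 0"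
    proof (cases "finite (Amb_inf A H \<omega>)")
      case True
      have "Tstar A T H \<omega> = (INF (x, t)\<in>Amb_inf A H \<omega>. ereal t + T (shift x t \<omega>))"
        using True by (simp add: Tstar_def)
      also have "\<dots> \<le> ereal 0 + T (shift 0 0 \<omega>)"
        by (rule INF_lower2[OF Amb_0_in]) simp
      also have "\<dots> < 0" using Tneg om by (simp add: shift_0)
      finally show ?thesis .
    next
      case False then show ?thesis by (simp add: Tstar_def)
    qed
  qed
  have ae: "AE \<omega> in M. Tstar A T H \<omega> \<noteq> - \<infinity>"
  proof -
    have "AE \<omega> in M. \<omega> \<in> E" using assms(5) unfolding E_def by (intro P.AE_prob_1) simp
    then show ?thesis by eventually_elim (auto simp: E_def)
  qed
  have co: "\<forall>\<omega>\<in>space M. Tstar A T H \<omega> \<noteq> - \<infinity> \<longrightarrow>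
        (\<forall>\<xi>1 \<xi>2. Phi_before A f \<omega> (real_of_ereal (Tstar A T H \<omega>)) 0 \<xi>1 0
                 = Phi_before A f \<omega> (real_of_ereal (Tstar A T H \<omega>)) 0 \<xi>2 0)"
    using coalesce[OF sp Tneg Hsub coal] by blast
  show ?thesis unfolding cftp_time_def using meas neg ae co by blast
qed


end
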